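(* Suppose $f$ is an infinitely renormalizable $\mathcal C^3$ dissipative gap mapping. Then for every $\varepsilon>0$ there is $n_0\in\mathbb N$ such that for all $n\ge n_0$ there exists an affine gap mapping $g_n$ (both branches affine) with $\|\mathcal R^nf-g_n\|_{\mathcal C^3}\le\varepsilon$.
   Context: A dissipative gap map is a map $f:[a_L,a_R]\setminus\{0\}\to[a_L,a_R]$, $a_L<0<a_R$, continuous and strictly increasing on $[a_L,0)$ and $(0,a_R]$, with $f(0^-)=a_R$, $f(0^+)=a_L$, $f(a_L)>f(a_R)$, differentiable with $0<f'\le\nu<1$. With domain $[b-1,b]$, branches $f_L,f_R$ and gap $G=(f_R(b),f_L(b-1))$, $f$ is renormalizable if there is a minimal $k\ge1$ with $0\notin\bigcup_{i=0}^k\overline{f^i(G)}$ and either $\overline G,\dots,\overline{f^{k-1}(G)}\subset(b-1,0)$, $\overline{f^k(G)}\subset(0,b)$, or the same with sides exchanged. With $0^+_j=f^{j-1}(b-1)$, $0^-_j=f^{j-1}(b)$, $I'=[0^+_{k+1},0^-_{k+2}]$ in the first case and $I'=[0^+_{k+2},0^-_{k+1}]$ in the second; the renormalization is $\mathcal Rf(x)=R(|I'|x)/|I'|$ where $R$ is the first return map of $f$ to $I'$ (again a dissipative gap map). $f$ is infinitely renormalizable if $\mathcal R^nf$ is defined for all $n$. *)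

theory Defs
  imports "HOL-Analysis.Analysis"
begin

text \<open>A map is represented by a pair (b, f): the domain is [b-1, b] (with b-1 < 0 < b),
  and f is only meaningful on [b-1,b] minus 0 (the value f 0 is irrelevant).\<close>

definition gap_map :: "real \<Rightarrow> (real \<Rightarrow> real) \<Rightarrow> bool" where
  "gap_map b f \<longleftrightarrow>
     b - 1 < 0 \<and> 0 < b \<and>
     (\<forall>x \<in> {b-1..b} - {0}. f x \<in> {b-1..b}) \<and>
     continuous_on {b-1..<0} f \<and> continuous_on {0<..b} f \<and>
     strict_mono_on {b-1..<0} f \<and> strict_mono_on {0<..b} f \<and>
     (f \<longlongrightarrow> b) (at_left 0) \<and> (f \<longlongrightarrow> b - 1) (at_right 0) \<and>
     f (b - 1) > f b"

definition dissipative_gap_map :: "real \<Rightarrow> (real \<Rightarrow> real) \<Rightarrow> bool" where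
  "dissipative_gap_map b f \<longleftrightarrow> gap_map b f \<and>
     (\<exists>\<nu> < 1. \<forall>x \<in> {b-1..b} - {0}. \<exists>d.
        (f has_real_derivative d) (at x within ({b-1..b} - {0})) \<and> 0 < d \<and> d \<le> \<nu>)"

definition C3_branch :: "real \<Rightarrow> real \<Rightarrow> (real \<Rightarrow> real) \<Rightarrow> bool" where
  "C3_branch a c f \<longleftrightarrow> (\<exists>D :: nat \<Rightarrow> real \<Rightarrow> real.
     (\<forall>k\<le>3. continuous_on {a..c} (D k)) \<and>
     (\<forall>x \<in> {a<..<c}. D 0 x = f x) \<and>
     (\<forall>k<3. \<forall>x \<in> {a<..<c}. (D k has_real_derivative D (Suc k) x) (at x)))"

definition C3_gap_map :: "real \<Rightarrow> (real \<Rightarrow> real) \<Rightarrow> bool" where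
  "C3_gap_map b f \<longleftrightarrow> C3_branch (b-1) 0 f \<and> C3_branch 0 b f"

definition affine_gap_map :: "real \<Rightarrow> (real \<Rightarrow> real) \<Rightarrow> bool" where
  "affine_gap_map b g \<longleftrightarrow> gap_map b g \<and>
     (\<exists>sL tL sR tR. (\<forall>x \<in> {b-1..<0}. g x = sL * x + tL) \<and> (\<forall>x \<in> {0<..b}. g x = sR * x + tR))"

definition C3_norm :: "real \<Rightarrow> (real \<Rightarrow> real) \<Rightarrow> ereal" where
  "C3_norm b h = (SUP p \<in> {0..3::nat} \<times> ({b-1<..<0} \<union> {0<..<b}).
                     ereal \<bar>(deriv ^^ fst p) h (snd p)\<bar>)"

definition gap_interval :: "real \<Rightarrow> (real \<Rightarrow> real) \<Rightarrow> real set" where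
  "gap_interval b f = {f b <..< f (b - 1)}"

definition renorm_left :: "real \<Rightarrow> (real \<Rightarrow> real) \<Rightarrow> nat \<Rightarrow> bool" where
  "renorm_left b f k \<longleftrightarrow>
     0 \<notin> (\<Union>i\<in>{0..k}. closure ((f ^^ i) ` gap_interval b f)) \<and>
     (\<forall>i<k. closure ((f ^^ i) ` gap_interval b f) \<subseteq> {b-1<..<0}) \<and>
     closure ((f ^^ k) ` gap_interval b f) \<subseteq> {0<..<b}"

definition renorm_right :: "real \<Rightarrow> (real \<Rightarrow> real) \<Rightarrow> nat \<Rightarrow> bool" where
  "renorm_right b f k \<longleftrightarrow>
     0 \<notin> (\<Union>i\<in>{0..k}. closure ((f ^^ i) ` gap_interval b f)) \<and>
     (\<forall>i<k. closure ((f ^^ i) ` gap_interval b f) \<subseteq> {0<..<b}) \<and>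
     closure ((f ^^ k) ` gap_interval b f) \<subseteq> {b-1<..<0}"

definition renorm_cond :: "real \<Rightarrow> (real \<Rightarrow> real) \<Rightarrow> nat \<Rightarrow> bool" where
  "renorm_cond b f k \<longleftrightarrow> 1 \<le> k \<and> (renorm_left b f k \<or> renorm_right b f k)"

definition renormalizable :: "real \<times> (real \<Rightarrow> real) \<Rightarrow> bool" where
  "renormalizable m \<longleftrightarrow> (\<exists>k. renorm_cond (fst m) (snd m) k)"

definition renorm_k :: "real \<Rightarrow> (real \<Rightarrow> real) \<Rightarrow> nat" where
  "renorm_k b f = (LEAST k. renorm_cond b f k)"

text \<open>Endpoints of I': with 0^+_j = f^(j-1)(b-1), 0^-_j = f^(j-1)(b).\<close>
definition renorm_interval :: "real \<Rightarrow> (real \<Rightarrow> real) \<Rightarrow> real \<times> real" where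
  "renorm_interval b f = (let k = renorm_k b f in
     if renorm_left b f k then ((f ^^ k) (b - 1), (f ^^ (k + 1)) b)
     else ((f ^^ (k + 1)) (b - 1), (f ^^ k) b))"

definition return_time :: "real \<Rightarrow> real \<Rightarrow> (real \<Rightarrow> real) \<Rightarrow> real \<Rightarrow> nat" where
  "return_time l r f x = (LEAST t. 1 \<le> t \<and> (f ^^ t) x \<in> {l..r})"

text \<open>Renormalization: first return map to I' = [l,r], rescaled by |I'|; new domain
  [l/|I'|, r/|I'|] = [b'-1, b'] with b' = r/|I'|.\<close>
definition renorm :: "real \<times> (real \<Rightarrow> real) \<Rightarrow> real \<times> (real \<Rightarrow> real)" where
  "renorm m = (let b = fst m; f = snd m; (l, r) = renorm_interval b f; L = r - l in
     (r / L, \<lambda>y. (f ^^ return_time l r f (L * y)) (L * y) / L))"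

definition infinitely_renormalizable :: "real \<Rightarrow> (real \<Rightarrow> real) \<Rightarrow> bool" where
  "infinitely_renormalizable b f \<longleftrightarrow> (\<forall>n. renormalizable ((renorm ^^ n) (b, f)))"

end

theory Submission
  imports Defs "HOL-Analysis.Analysis"
begin

primrec ed :: "(real\<Rightarrow>real) \<Rightarrow> (real\<Rightarrow>real) \<Rightarrow> (real\<Rightarrow>real) \<Rightarrow> (real\<Rightarrow>real) \<Rightarrow> nat \<Rightarrow> real \<Rightarrow> real \<times> real \<times> real" where
  "ed h D1 D2 D3 0 x = (1, 0, 0)"
| "ed h D1 D2 D3 (Suc m) x = (let y = (h ^^ m) x; t = ed h D1 D2 D3 m x;
      a = fst t; c = fst (snd t); d = snd (snd t) in
     (D1 y * a, D2 y * a * a + D1 y * c, D3 y * a ^ 3 + 3 * D2 y * a * c + D1 y * d))"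

definition "e1 h D1 D2 D3 m x = fst (ed h D1 D2 D3 m x)"
definition "e2 h D1 D2 D3 m x = fst (snd (ed h D1 D2 D3 m x))"
definition "e3 h D1 D2 D3 m x = snd (snd (ed h D1 D2 D3 m x))"

lemma e_simps:
  "e1 h D1 D2 D3 0 x = 1" "e2 h D1 D2 D3 0 x = 0" "e3 h D1 D2 D3 0 x = 0"
  "e1 h D1 D2 D3 (Suc m) x = D1 ((h ^^ m) x) * e1 h D1 D2 D3 m x"
  "e2 h D1 D2 D3 (Suc m) x = D2 ((h ^^ m) x) * e1 h D1 D2 D3 m x * e1 h D1 D2 D3 m x + D1 ((h ^^ m) x) * e2 h D1 D2 D3 m x"
  "e3 h D1 D2 D3 (Suc m) x = D3 ((h ^^ m) x) * (e1 h D1 D2 D3 m x) ^ 3 + 3 * D2 ((h ^^ m) x) * e1 h D1 D2 D3 m x * e2 h D1 D2 D3 m x + D1 ((h ^^ m) x) * e3 h D1 D2 D3 m x"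
  by (simp_all add: e1_def e2_def e3_def Let_def)

lemma bound2:
  fixes \<nu> M a c d1 d2 :: real
  assumes "0 \<le> \<nu>" "\<nu> \<le> 1" "\<bar>a\<bar> \<le> \<nu> ^ m" "\<bar>c\<bar> \<le> M * m * \<nu> ^ (m - 1)"
    "\<bar>d1\<bar> \<le> \<nu>" "\<bar>d2\<bar> \<le> M"
  shows "\<bar>d2 * a * a + d1 * c\<bar> \<le> M * (Suc m) * \<nu> ^ (Suc m - 1)"
proof -
  have M0: "0 \<le> M" using assms(6) by linarith
  have aa: "\<bar>a\<bar> * \<bar>a\<bar> \<le> \<nu>^m * \<nu>^m" using assms by (intro mult_mono) auto
  have "\<bar>d2 * a * a\<bar> = \<bar>d2\<bar> * (\<bar>a\<bar> * \<bar>a\<bar>)" by (simp add: abs_mult)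
  also have "\<dots> \<le> M * (\<nu>^m * \<nu>^m)"
    using assms aa by (intro mult_mono) auto
  also have "\<dots> \<le> M * \<nu>^m" using assms M0 by (intro mult_left_mono) (auto intro: mult_left_le_one_le simp: power_le_one)
  finally have A: "\<bar>d2 * a * a\<bar> \<le> M * \<nu>^m" .
  have B: "\<bar>d1 * c\<bar> \<le> M * m * \<nu>^m"
  proof (cases m)
    case 0 then show ?thesis using assms by simp
  next
    case (Suc m')
    have "\<bar>d1 * c\<bar> \<le> \<nu> * (M * m * \<nu> ^ (m - 1))"
      unfolding abs_mult using assms by (intro mult_mono) auto
    also have "\<dots> = M * m * \<nu>^m" using Suc by (simp add: algebra_simps)
    finally show ?thesis .
  qed
  have "\<bar>d2 * a * a + d1 * c\<bar> \<le> M * \<nu>^m + M * m * \<nu>^m" using A B by linarith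
  also have "\<dots> = M * (Suc m) * \<nu> ^ (Suc m - 1)" by (simp add: algebra_simps)
  finally show ?thesis .
qed

lemma bound3:
  fixes \<nu> M K a c d d1 d2 d3 :: real
  assumes "0 \<le> \<nu>" "\<nu> \<le> 1" "\<bar>a\<bar> \<le> \<nu> ^ m" "\<bar>c\<bar> \<le> M * m * \<nu> ^ (m - 1)"
    "\<bar>d\<bar> \<le> (K * m + 3 * M^2 * m^2) * \<nu> ^ (m - 1)"
    "\<bar>d1\<bar> \<le> \<nu>" "\<bar>d2\<bar> \<le> M" "\<bar>d3\<bar> \<le> K"
  shows "\<bar>d3 * a ^ 3 + 3 * d2 * a * c + d1 * d\<bar> \<le> (K * Suc m + 3 * M^2 * (Suc m)^2) * \<nu> ^ (Suc m - 1)"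
proof -
  have M0: "0 \<le> M" and K0: "0 \<le> K" using assms by linarith+
  have pm: "\<nu>^m \<le> 1" using assms by (simp add: power_le_one)
  have a1: "\<bar>a\<bar> \<le> 1" using assms pm by linarith
  have a3: "\<bar>a\<bar> ^ 3 \<le> \<bar>a\<bar>"
    using power_decreasing[of 1 3 "\<bar>a\<bar>"] a1 by simp
  have "\<bar>d3 * a ^ 3\<bar> \<le> K * \<bar>a\<bar>" using a3 unfolding abs_mult power_abs
    using assms a1 K0 by (intro mult_mono) (auto simp: power_le_one)
  also have "\<dots> \<le> K * \<nu>^m" using assms K0 by (intro mult_left_mono) auto
  finally have A: "\<bar>d3 * a ^ 3\<bar> \<le> K * \<nu>^m" .
  have B: "\<bar>3 * d2 * a * c\<bar> \<le> 3 * M * M * m * \<nu>^m"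
  proof (cases m)
    case 0 then show ?thesis using assms by simp
  next
    case (Suc m')
    have c1: "\<bar>c\<bar> \<le> M * m" using assms(4) M0 assms(1,2)
      by (smt (verit) mult_left_le mult_nonneg_nonneg of_nat_0_le_iff power_le_one)
    have "\<bar>3 * d2 * a * c\<bar> = 3 * (\<bar>d2\<bar> * \<bar>a\<bar> * \<bar>c\<bar>)" by (simp add: abs_mult)
    also have "\<dots> \<le> 3 * (M * \<nu>^m * (M * m))"
      using assms c1 M0 by (intro mult_left_mono mult_mono) auto
    finally show ?thesis by (simp add: algebra_simps)
  qed
  have D: "\<bar>d1 * d\<bar> \<le> (K * m + 3 * M^2 * m^2) * \<nu>^m"
  proof (cases m)
    case 0 then show ?thesis using assms by simp
  next
    case (Suc m')
    have "\<bar>d1 * d\<bar> \<le> \<nu> * ((K * m + 3 * M^2 * m^2) * \<nu> ^ (m - 1))"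
      unfolding abs_mult using assms by (intro mult_mono) auto
    also have "\<dots> = (K * m + 3 * M^2 * m^2) * \<nu>^m" using Suc by (simp add: algebra_simps)
    finally show ?thesis .
  qed
  have "\<bar>d3 * a ^ 3 + 3 * d2 * a * c + d1 * d\<bar> \<le> K * \<nu>^m + 3 * M * M * m * \<nu>^m + (K * m + 3 * M^2 * m^2) * \<nu>^m"
    using A B D by linarith
  also have "\<dots> = (K * (m + 1) + 3 * M^2 * (m + m^2)) * \<nu>^m" by (simp add: algebra_simps power2_eq_square)
  also have "\<dots> \<le> (K * Suc m + 3 * M^2 * (Suc m)^2) * \<nu> ^ (Suc m - 1)"
  proof -
    have "real (m + m^2) \<le> real ((Suc m)^2)" by (simp add: power2_eq_square)
    then have "3 * M^2 * real (m + m^2) \<le> 3 * M^2 * real ((Suc m)^2)"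
      by (intro mult_left_mono) auto
    then have "K * real (m + 1) + 3 * M^2 * real (m + m^2) \<le> K * real (Suc m) + 3 * M^2 * real ((Suc m)^2)"
      by simp
    then show ?thesis using assms(1) by (simp add: mult_right_mono)
  qed
  finally show ?thesis .
qed

lemma chain_iter:
  fixes h D1 D2 D3 :: "real \<Rightarrow> real" and V :: "real set"
  assumes H: "\<And>x. x \<in> V \<Longrightarrow> (h has_real_derivative D1 x) (at x) \<and> (D1 has_real_derivative D2 x) (at x)
        \<and> (D2 has_real_derivative D3 x) (at x) \<and> \<bar>D1 x\<bar> \<le> \<nu> \<and> \<bar>D2 x\<bar> \<le> M \<and> \<bar>D3 x\<bar> \<le> K"
    and nu: "0 \<le> \<nu>" "\<nu> \<le> 1" and MK: "0 \<le> M" "0 \<le> K"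
  shows "(\<forall>i<m. (h ^^ i) x \<in> V) \<Longrightarrow>
     ((h ^^ m) has_real_derivative e1 h D1 D2 D3 m x) (at x) \<and>
     (e1 h D1 D2 D3 m has_real_derivative e2 h D1 D2 D3 m x) (at x) \<and>
     (e2 h D1 D2 D3 m has_real_derivative e3 h D1 D2 D3 m x) (at x) \<and>
     \<bar>e1 h D1 D2 D3 m x\<bar> \<le> \<nu> ^ m \<and>
     \<bar>e2 h D1 D2 D3 m x\<bar> \<le> M * m * \<nu> ^ (m - 1) \<and>
     \<bar>e3 h D1 D2 D3 m x\<bar> \<le> (K * m + 3 * M^2 * m^2) * \<nu> ^ (m - 1)"
proof (induction m)
  case 0
  have e: "e1 h D1 D2 D3 0 = (\<lambda>x. 1)" "e2 h D1 D2 D3 0 = (\<lambda>x. 0)" by (auto simp: e_simps)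
  show ?case unfolding e by (auto simp: e_simps intro!: derivative_eq_intros)
next
  case (Suc m)
  let ?y = "(h ^^ m) x"
  have yV: "?y \<in> V" using Suc.prems by auto
  from Suc.IH Suc.prems have IH: "((h ^^ m) has_real_derivative e1 h D1 D2 D3 m x) (at x)"
     "(e1 h D1 D2 D3 m has_real_derivative e2 h D1 D2 D3 m x) (at x)"
     "(e2 h D1 D2 D3 m has_real_derivative e3 h D1 D2 D3 m x) (at x)"
     "\<bar>e1 h D1 D2 D3 m x\<bar> \<le> \<nu> ^ m"
     "\<bar>e2 h D1 D2 D3 m x\<bar> \<le> M * m * \<nu> ^ (m - 1)"
     "\<bar>e3 h D1 D2 D3 m x\<bar> \<le> (K * m + 3 * M^2 * m^2) * \<nu> ^ (m - 1)" by auto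
  note Hy = H[OF yV]
  have fe1: "e1 h D1 D2 D3 (Suc m) = (\<lambda>x. D1 ((h ^^ m) x) * e1 h D1 D2 D3 m x)"
    by (auto simp: e_simps)
  have fe2: "e2 h D1 D2 D3 (Suc m) = (\<lambda>x. D2 ((h ^^ m) x) * e1 h D1 D2 D3 m x * e1 h D1 D2 D3 m x + D1 ((h ^^ m) x) * e2 h D1 D2 D3 m x)"
    by (auto simp: e_simps)
  have d0: "((h ^^ Suc m) has_real_derivative e1 h D1 D2 D3 (Suc m) x) (at x)"
  proof -
    have "((\<lambda>x. h ((h ^^ m) x)) has_real_derivative D1 ?y * e1 h D1 D2 D3 m x) (at x)"
      using DERIV_chain2[of h "D1 ?y" "h ^^ m" x] Hy IH(1) by auto
    then show ?thesis by (simp add: e_simps o_def)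
  qed
  have c1: "((\<lambda>x. D1 ((h ^^ m) x)) has_real_derivative D2 ?y * e1 h D1 D2 D3 m x) (at x)"
    using DERIV_chain2[of D1 "D2 ?y" "h ^^ m" x] Hy IH(1) by auto
  have c2: "((\<lambda>x. D2 ((h ^^ m) x)) has_real_derivative D3 ?y * e1 h D1 D2 D3 m x) (at x)"
    using DERIV_chain2[of D2 "D3 ?y" "h ^^ m" x] Hy IH(1) by auto
  have d1: "(e1 h D1 D2 D3 (Suc m) has_real_derivative e2 h D1 D2 D3 (Suc m) x) (at x)"
    unfolding fe1 using DERIV_mult[OF c1 IH(2)] by (simp add: e_simps algebra_simps)
  have d2: "(e2 h D1 D2 D3 (Suc m) has_real_derivative e3 h D1 D2 D3 (Suc m) x) (at x)"
  proof -
    have "((\<lambda>x. D2 ((h ^^ m) x) * e1 h D1 D2 D3 m x * e1 h D1 D2 D3 m x + D1 ((h ^^ m) x) * e2 h D1 D2 D3 m x)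
      has_real_derivative
        (D3 ?y * e1 h D1 D2 D3 m x * e1 h D1 D2 D3 m x * e1 h D1 D2 D3 m x
         + D2 ?y * e2 h D1 D2 D3 m x * e1 h D1 D2 D3 m x
         + D2 ?y * e1 h D1 D2 D3 m x * e2 h D1 D2 D3 m x
         + (D2 ?y * e1 h D1 D2 D3 m x * e2 h D1 D2 D3 m x + D1 ?y * e3 h D1 D2 D3 m x))) (at x)"
      by (rule derivative_eq_intros c1 c2 IH(2) IH(3) refl | simp add: algebra_simps)+
    then show ?thesis unfolding fe2 by (simp add: e_simps algebra_simps power3_eq_cube)
  qed
  have b1: "\<bar>e1 h D1 D2 D3 (Suc m) x\<bar> \<le> \<nu> ^ Suc m"
    unfolding e_simps abs_mult using Hy IH(4) nu by (simp add: mult_mono)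
  have b2: "\<bar>e2 h D1 D2 D3 (Suc m) x\<bar> \<le> M * (Suc m) * \<nu> ^ (Suc m - 1)"
    unfolding e_simps by (rule bound2[OF nu IH(4) IH(5)]) (use Hy in auto)
  have b3: "\<bar>e3 h D1 D2 D3 (Suc m) x\<bar> \<le> (K * Suc m + 3 * M^2 * (Suc m)^2) * \<nu> ^ (Suc m - 1)"
    unfolding e_simps by (rule bound3[OF nu IH(4) IH(5) IH(6)]) (use Hy in auto)
  show ?case using d0 d1 d2 b1 b2 b3 by blast
qed


lemma gm_basic:
  assumes "gap_map b h"
  shows "b - 1 < 0" "0 < b" "\<And>x. x \<in> {b-1..b} \<Longrightarrow> x \<noteq> 0 \<Longrightarrow> h x \<in> {b-1..b}"
    "continuous_on {b-1..<0} h" "continuous_on {0<..b} h"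
    "strict_mono_on {b-1..<0} h" "strict_mono_on {0<..b} h"
    "(h \<longlongrightarrow> b) (at_left 0)" "(h \<longlongrightarrow> b - 1) (at_right 0)" "h (b-1) > h b"
  using assms unfolding gap_map_def by auto

lemma gm_left_lt:
  assumes "gap_map b h" "x \<in> {b-1..<0}"
  shows "h x < b"
proof -
  note g = gm_basic[OF assms(1)]
  have x0: "x < 0" using assms by auto
  have "h (x/2) \<le> b"
  proof (rule tendsto_le[OF trivial_limit_at_left_real g(8) tendsto_const])
    have "\<forall>\<^sub>F z in at_left 0. z \<in> {x/2<..<0}" using eventually_at_left_real[of "x/2" 0] x0 by auto
    then show "\<forall>\<^sub>F z in at_left 0. h (x/2) \<le> h z"
    proof (rule eventually_mono)
      fix z assume "z \<in> {x/2<..<0}"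
      then show "h (x/2) \<le> h z" using g(6) assms(2) x0
        by (intro less_imp_le strict_mono_onD[OF g(6)]) auto
    qed
  qed
  moreover have "h x < h (x/2)" using assms x0 by (intro strict_mono_onD[OF g(6)]) auto
  ultimately show ?thesis by simp
qed

lemma gm_right_gt:
  assumes "gap_map b h" "x \<in> {0<..b}"
  shows "b - 1 < h x"
proof -
  note g = gm_basic[OF assms(1)]
  have x0: "0 < x" using assms by auto
  have "b - 1 \<le> h (x/2)"
  proof (rule tendsto_le[OF trivial_limit_at_right_real tendsto_const g(9)])
    have "\<forall>\<^sub>F z in at_right 0. z \<in> {0<..<x/2}" using eventually_at_right_real[of 0 "x/2"] x0 by auto
    then show "\<forall>\<^sub>F z in at_right 0. h z \<le> h (x/2)"
    proof (rule eventually_mono)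
      fix z assume "z \<in> {0<..<x/2}"
      then show "h z \<le> h (x/2)" using g(7) assms(2) x0
        by (intro less_imp_le strict_mono_onD[OF g(7)]) auto
    qed
  qed
  moreover have "h (x/2) < h x" using assms x0 by (intro strict_mono_onD[OF g(7)]) auto
  ultimately show ?thesis by simp
qed

definition U :: "real \<Rightarrow> real set" where "U b = {b-1<..<0} \<union> {0<..<b}"

definition SM :: "real \<Rightarrow> (real \<Rightarrow> real) \<Rightarrow> real \<Rightarrow> real \<Rightarrow> real \<Rightarrow> bool" where
  "SM b h \<nu> M K \<longleftrightarrow> (\<exists>D1 D2 D3. \<forall>x \<in> U b. (h has_real_derivative D1 x) (at x) \<and>
      (D1 has_real_derivative D2 x) (at x) \<and> (D2 has_real_derivative D3 x) (at x) \<and>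
      \<bar>D1 x\<bar> \<le> \<nu> \<and> \<bar>D2 x\<bar> \<le> M \<and> \<bar>D3 x\<bar> \<le> K)"

lemma arith_bounds:
  fixes L \<nu> M K C a c d :: real
  assumes "0 < L" "L \<le> 1" "0 \<le> \<nu>" "\<nu> \<le> 1" "0 \<le> M" "0 \<le> K" "2 \<le> m"
    "real m ^ 2 * \<nu> ^ (m - 1) \<le> C"
    "\<bar>a\<bar> \<le> \<nu> ^ m" "\<bar>c\<bar> \<le> M * m * \<nu> ^ (m - 1)" "\<bar>d\<bar> \<le> (K * m + 3 * M^2 * m^2) * \<nu> ^ (m - 1)"
  shows "\<bar>a\<bar> \<le> \<nu>^2" "\<bar>L * c\<bar> \<le> M * C" "\<bar>L^2 * d\<bar> \<le> (K + 3 * M^2) * C"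
proof -
  show "\<bar>a\<bar> \<le> \<nu>^2" using assms(9) power_decreasing[of 2 m \<nu>] assms by simp
  have mm: "real m \<le> real m ^ 2" using assms(7) by (simp add: power2_eq_square)
  have pn: "0 \<le> \<nu> ^ (m - 1)" using assms by simp
  have "\<bar>L * c\<bar> \<le> 1 * (M * m * \<nu> ^ (m - 1))" unfolding abs_mult
    using assms by (intro mult_mono) auto
  also have "\<dots> \<le> M * (real m ^ 2 * \<nu> ^ (m - 1))"
    using mm pn assms by (simp add: mult.assoc mult_left_mono mult_right_mono)
  also have "\<dots> \<le> M * C" using assms by (intro mult_left_mono) auto
  finally show "\<bar>L * c\<bar> \<le> M * C" .
  have L2: "L^2 \<le> 1" using assms by (simp add: power_le_one)
  have "\<bar>L^2 * d\<bar> \<le> 1 * ((K * m + 3 * M^2 * m^2) * \<nu> ^ (m - 1))" unfolding abs_mult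
    using assms L2 by (intro mult_mono) auto
  also have "\<dots> \<le> ((K + 3 * M^2) * real m ^ 2) * \<nu> ^ (m - 1)"
  proof -
    have "K * m \<le> K * real m ^ 2" using mm assms by (intro mult_left_mono) auto
    then have "K * m + 3 * M^2 * m^2 \<le> (K + 3 * M^2) * real m ^ 2" by (simp add: algebra_simps)
    then show ?thesis using pn by (simp add: mult_right_mono)
  qed
  also have "\<dots> = (K + 3 * M^2) * (real m ^ 2 * \<nu> ^ (m - 1))" by simp
  also have "\<dots> \<le> (K + 3 * M^2) * C" using assms by (intro mult_left_mono) auto
  finally show "\<bar>L^2 * d\<bar> \<le> (K + 3 * M^2) * C" .
qed

lemma branch_deriv:
  fixes h D1 D2 D3 F F1 F2 F3 :: "real \<Rightarrow> real" and W V :: "real set"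
  assumes H: "\<And>x. x \<in> W \<Longrightarrow> (h has_real_derivative D1 x) (at x) \<and> (D1 has_real_derivative D2 x) (at x)
        \<and> (D2 has_real_derivative D3 x) (at x) \<and> \<bar>D1 x\<bar> \<le> \<nu> \<and> \<bar>D2 x\<bar> \<le> M \<and> \<bar>D3 x\<bar> \<le> K"
    and nu: "0 \<le> \<nu>" "\<nu> \<le> 1" and MK: "0 \<le> M" "0 \<le> K"
    and L: "0 < L" "L \<le> 1" and m: "2 \<le> m" and Cb: "real m ^ 2 * \<nu> ^ (m - 1) \<le> C"
    and V: "open V" "y \<in> V"
    and orb: "\<And>z i. z \<in> V \<Longrightarrow> i < m \<Longrightarrow> (h ^^ i) (L * z) \<in> W"
    and eqF: "\<And>z. z \<in> V \<Longrightarrow> F z = (h ^^ m) (L * z) / L"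
    and eq1: "\<And>z. z \<in> V \<Longrightarrow> F1 z = e1 h D1 D2 D3 m (L * z)"
    and eq2: "\<And>z. z \<in> V \<Longrightarrow> F2 z = L * e2 h D1 D2 D3 m (L * z)"
    and eq3: "F3 y = L^2 * e3 h D1 D2 D3 m (L * y)"
  shows "(F has_real_derivative F1 y) (at y) \<and> (F1 has_real_derivative F2 y) (at y) \<and>
     (F2 has_real_derivative F3 y) (at y) \<and> \<bar>F1 y\<bar> \<le> \<nu>^2 \<and> \<bar>F2 y\<bar> \<le> M * C \<and> \<bar>F3 y\<bar> \<le> (K + 3 * M^2) * C"
proof -
  have ch: "((h ^^ m) has_real_derivative e1 h D1 D2 D3 m (L * y)) (at (L * y)) \<and>
     (e1 h D1 D2 D3 m has_real_derivative e2 h D1 D2 D3 m (L * y)) (at (L * y)) \<and>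
     (e2 h D1 D2 D3 m has_real_derivative e3 h D1 D2 D3 m (L * y)) (at (L * y)) \<and>
     \<bar>e1 h D1 D2 D3 m (L * y)\<bar> \<le> \<nu> ^ m \<and>
     \<bar>e2 h D1 D2 D3 m (L * y)\<bar> \<le> M * m * \<nu> ^ (m - 1) \<and>
     \<bar>e3 h D1 D2 D3 m (L * y)\<bar> \<le> (K * m + 3 * M^2 * m^2) * \<nu> ^ (m - 1)"
    by (rule chain_iter[OF H nu MK]) (use orb V in auto)
  have dL: "((\<lambda>z. L * z) has_real_derivative L) (at y)"
    by (rule derivative_eq_intros refl | simp)+
  have a1: "((\<lambda>z. (h ^^ m) (L * z) / L) has_real_derivative e1 h D1 D2 D3 m (L * y)) (at y)"
  proof -
    have "((\<lambda>z. (h ^^ m) (L * z)) has_real_derivative e1 h D1 D2 D3 m (L * y) * L) (at y)"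
      using DERIV_chain2[OF _ dL] ch by blast
    from DERIV_cdivide[OF this, of L] show ?thesis using L by simp
  qed
  have a2: "((\<lambda>z. e1 h D1 D2 D3 m (L * z)) has_real_derivative L * e2 h D1 D2 D3 m (L * y)) (at y)"
  proof -
    have "((\<lambda>z. e1 h D1 D2 D3 m (L * z)) has_real_derivative e2 h D1 D2 D3 m (L * y) * L) (at y)"
      using DERIV_chain2[OF _ dL] ch by blast
    then show ?thesis by (simp add: mult.commute)
  qed
  have a3: "((\<lambda>z. L * e2 h D1 D2 D3 m (L * z)) has_real_derivative L^2 * e3 h D1 D2 D3 m (L * y)) (at y)"
  proof -
    have "((\<lambda>z. e2 h D1 D2 D3 m (L * z)) has_real_derivative e3 h D1 D2 D3 m (L * y) * L) (at y)"
      using DERIV_chain2[OF _ dL] ch by blast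
    from DERIV_cmult[OF this, of L] show ?thesis by (simp add: power2_eq_square algebra_simps)
  qed
  have r1: "(F has_real_derivative F1 y) (at y)"
    using has_field_derivative_transform_within_open[OF a1 V, of F] eqF eq1 V by simp
  have r2: "(F1 has_real_derivative F2 y) (at y)"
    using has_field_derivative_transform_within_open[OF a2 V, of F1] eq1 eq2 V by simp
  have r3: "(F2 has_real_derivative F3 y) (at y)"
    using has_field_derivative_transform_within_open[OF a3 V, of F2] eq2 eq3 V by simp
  have bnd: "\<bar>e1 h D1 D2 D3 m (L * y)\<bar> \<le> \<nu>^2" "\<bar>L * e2 h D1 D2 D3 m (L * y)\<bar> \<le> M * C"
     "\<bar>L^2 * e3 h D1 D2 D3 m (L * y)\<bar> \<le> (K + 3 * M^2) * C"
    using arith_bounds[OF L(1,2) nu MK m Cb] ch by auto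
  show ?thesis using r1 r2 r3 bnd eq1 eq2 eq3 V by auto
qed

locale leftcase =
  fixes b :: real and h :: "real \<Rightarrow> real" and k :: nat
  assumes gm: "gap_map b h" and rl: "renorm_left b h k" and k1: "1 \<le> k"
begin

definition Q where "Q j = (h ^^ j) (b - 1)"
definition p where "p j = (h ^^ j) (h b)"
abbreviation G where "G \<equiv> gap_interval b h"
abbreviation I1 where "I1 \<equiv> {b - 1 .. h (b - 1)}"
abbreviation C where "C \<equiv> {h b .. h (b - 1)}"

lemmas g = gm_basic[OF gm]

lemma hb_gt: "b - 1 < h b" using gm_right_gt[OF gm, of b] g(2) by auto

lemma closG: "closure G = C"
  unfolding gap_interval_def using g(10) by (simp add: closure_greaterThanLessThan)

lemma cl_left: "i < k \<Longrightarrow> closure ((h ^^ i) ` G) \<subseteq> {b-1<..<0}"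
  using rl unfolding renorm_left_def by auto
lemma cl_right: "closure ((h ^^ k) ` G) \<subseteq> {0<..<b}"
  using rl unfolding renorm_left_def by auto

lemma C_sub: "C \<subseteq> I1" using hb_gt by auto

lemma lemA:
  "j \<le> k \<Longrightarrow> continuous_on I1 (h ^^ j) \<and> strict_mono_on I1 (h ^^ j) \<and>
     (h ^^ j) ` C \<subseteq> closure ((h ^^ j) ` G) \<and> (\<forall>z\<in>I1. b - 1 \<le> (h ^^ j) z)"
proof (induction j)
  case 0
  then show ?case by (auto simp: strict_mono_on_def closG intro: continuous_on_id)
next
  case (Suc j)
  then have jk: "j < k" by simp
  from Suc have IH: "continuous_on I1 (h ^^ j)" "strict_mono_on I1 (h ^^ j)"
    "(h ^^ j) ` C \<subseteq> closure ((h ^^ j) ` G)" "\<forall>z\<in>I1. b - 1 \<le> (h ^^ j) z" by auto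
  have top: "(h ^^ j) (h (b - 1)) < 0"
  proof -
    have "h (b-1) \<in> C" using g(10) by auto
    then have "(h ^^ j) (h (b - 1)) \<in> closure ((h ^^ j) ` G)" using IH(3) by auto
    then show ?thesis using cl_left[OF jk] by auto
  qed
  have into: "(h ^^ j) ` I1 \<subseteq> {b-1..<0}"
  proof
    fix y assume "y \<in> (h ^^ j) ` I1"
    then obtain z where z: "z \<in> I1" "y = (h ^^ j) z" by auto
    have "(h ^^ j) z \<le> (h ^^ j) (h (b - 1))"
      using z g(10) hb_gt by (cases "z = h (b-1)") (auto intro!: less_imp_le strict_mono_onD[OF IH(2)])
    then show "y \<in> {b-1..<0}" using top IH(4) z by auto
  qed
  have cont: "continuous_on I1 (h ^^ Suc j)"
    unfolding funpow.simps o_def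
    by (rule continuous_on_compose2[OF g(4) IH(1) into])
  have sm: "strict_mono_on I1 (h ^^ Suc j)"
  proof (rule strict_mono_onI)
    fix r s assume "r \<in> I1" "s \<in> I1" "r < s"
    then have "(h ^^ j) r < (h ^^ j) s" "(h ^^ j) r \<in> {b-1..<0}" "(h ^^ j) s \<in> {b-1..<0}"
      using strict_mono_onD[OF IH(2)] into by blast+
    then show "(h ^^ Suc j) r < (h ^^ Suc j) s" using strict_mono_onD[OF g(6)] by auto
  qed
  have img: "(h ^^ Suc j) ` C \<subseteq> closure ((h ^^ Suc j) ` G)"
  proof -
    have "continuous_on (closure G) (h ^^ Suc j)"
      using continuous_on_subset[OF cont C_sub] closG by simp
    from image_closure_subset[OF this closed_closure closure_subset]
    show ?thesis using closG by simp
  qed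
  have low: "\<forall>z\<in>I1. b - 1 \<le> (h ^^ Suc j) z"
  proof
    fix z assume "z \<in> I1"
    then have "(h ^^ j) z \<in> {b-1..<0}" using into by blast
    then have "h ((h ^^ j) z) \<in> {b-1..b}" using g(3) g(2) by auto
    then show "b - 1 \<le> (h ^^ Suc j) z" by simp
  qed
  show ?case using cont sm img low by blast
qed

lemma A1: "j \<le> k \<Longrightarrow> continuous_on I1 (h ^^ j)" using lemA by blast
lemma A2: "j \<le> k \<Longrightarrow> strict_mono_on I1 (h ^^ j)" using lemA by blast
lemma A3: "j \<le> k \<Longrightarrow> (h ^^ j) ` C \<subseteq> closure ((h ^^ j) ` G)" using lemA by blast
lemma A4: "j \<le> k \<Longrightarrow> z \<in> I1 \<Longrightarrow> b - 1 \<le> (h ^^ j) z" using lemA by blast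

lemma QS: "Q (Suc j) = (h ^^ j) (h (b - 1))"
  unfolding Q_def by (simp add: funpow_Suc_right del: funpow.simps)

lemma pS: "(h ^^ Suc j) b = p j"
  unfolding p_def by (simp add: funpow_Suc_right del: funpow.simps)

lemma Qp: "j \<le> k \<Longrightarrow> Q j < p j \<and> p j < Q (Suc j)"
  unfolding QS unfolding Q_def p_def
  using strict_mono_onD[OF A2, of j "b-1" "h b"] strict_mono_onD[OF A2, of j "h b" "h (b-1)"]
    hb_gt g(10) by auto

lemma pQ_in: "j \<le> k \<Longrightarrow> p j \<in> closure ((h ^^ j) ` G) \<and> Q (Suc j) \<in> closure ((h ^^ j) ` G)"
  unfolding QS p_def using A3[of j] g(10) by auto

lemma loc_left: "j < k \<Longrightarrow> p j \<in> {b-1<..<0} \<and> Q (Suc j) \<in> {b-1<..<0}"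
  using pQ_in[of j] cl_left[of j] by auto

lemma loc_right: "p k \<in> {0<..<b} \<and> Q (Suc k) \<in> {0<..<b}"
  using pQ_in[of k] cl_right by auto

lemma Q_ge: "j \<le> k \<Longrightarrow> b - 1 \<le> Q j"
  unfolding Q_def using A4[of j "b-1"] g(10) hb_gt by auto

lemma Q_mono: "i \<le> j \<Longrightarrow> j \<le> Suc k \<Longrightarrow> Q i \<le> Q j"
proof (induction j)
  case 0 then show ?case by simp
next
  case (Suc j)
  show ?case
  proof (cases "i = Suc j")
    case True then show ?thesis by simp
  next
    case False
    then have "Q i \<le> Q j" using Suc by simp
    moreover have "Q j < Q (Suc j)" using Qp[of j] Suc by auto
    ultimately show ?thesis by simp
  qed
qed

lemma orbit_mid: "z \<in> {b-1<..<h b} \<Longrightarrow> j \<le> k \<Longrightarrow> Q j < (h ^^ j) z \<and> (h ^^ j) z < p j"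
  unfolding Q_def p_def
  using strict_mono_onD[OF A2, of j "b-1" z] strict_mono_onD[OF A2, of j z "h b"]
    hb_gt g(10) by auto

lemma lk_neg: "Q k < 0"
  using loc_left[of "k - 1"] k1 by (cases k) auto

lemma left_step1: "x \<in> {Q k..<0} \<Longrightarrow> h x \<in> {Q (Suc k)..<b}"
proof -
  assume x: "x \<in> {Q k..<0}"
  have Qk: "Q k \<in> {b-1..<0}" using Q_ge[of k] lk_neg by auto
  have "h (Q k) \<le> h x"
    using x Qk by (cases "x = Q k") (auto intro!: less_imp_le strict_mono_onD[OF g(6)])
  moreover have "h (Q k) = Q (Suc k)" unfolding Q_def by simp
  moreover have "h x < b" using gm_left_lt[OF gm] x Qk by auto
  ultimately show ?thesis by auto
qed

lemma left_step2: "x \<in> {Q k..<0} \<Longrightarrow> h (h x) \<in> {b-1<..<h b}"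
proof -
  assume x: "x \<in> {Q k..<0}"
  have hx: "h x \<in> {Q (Suc k)..<b}" by (rule left_step1[OF x])
  then have hx': "h x \<in> {0<..b}" using loc_right by auto
  have "b - 1 < h (h x)" using gm_right_gt[OF gm hx'] .
  moreover have "h (h x) < h b" using hx hx' g(2) by (intro strict_mono_onD[OF g(7)]) auto
  ultimately show ?thesis by auto
qed

lemma right_step1: "x \<in> {0<..p k} \<Longrightarrow> h x \<in> {b-1<..<h b}"
proof -
  assume x: "x \<in> {0<..p k}"
  have "b - 1 < h x" using gm_right_gt[OF gm] x loc_right by auto
  moreover have "h x < h b" using x loc_right g(2) by (intro strict_mono_onD[OF g(7)]) auto
  ultimately show ?thesis by auto
qed

lemma funpow_plus2: "(h ^^ (j + 2)) x = (h ^^ j) (h (h x))"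
  by (simp add: funpow_Suc_right del: funpow.simps)
lemma funpow_plus1: "(h ^^ (j + 1)) x = (h ^^ j) (h x)"
  by (simp add: funpow_Suc_right del: funpow.simps)


lemma Qk_gt: "b - 1 < Q k"
  using loc_left[of "k - 1"] k1 by (cases k) auto

lemma left_iter: "x \<in> {Q k..<0} \<Longrightarrow> j \<le> k \<Longrightarrow>
   Q j < (h ^^ (j + 2)) x \<and> (h ^^ (j + 2)) x < p j"
  unfolding funpow_plus2 using orbit_mid left_step2 by blast

lemma right_iter: "x \<in> {0<..p k} \<Longrightarrow> j \<le> k \<Longrightarrow>
   Q j < (h ^^ (j + 1)) x \<and> (h ^^ (j + 1)) x < p j"
  unfolding funpow_plus1 using orbit_mid right_step1 by blast

lemma left_orbitU: "x \<in> {Q k..<0} \<Longrightarrow> i < k + 2 \<Longrightarrow> (h ^^ i) x \<in> U b"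
proof -
  assume x: "x \<in> {Q k..<0}" and i: "i < k + 2"
  have "i = 0 \<or> i = 1 \<or> (i = (i - 2) + 2 \<and> i - 2 < k)" using i by arith
  then consider "i = 0" | "i = 1" | j where "i = j + 2" "j < k" by blast
  then show ?thesis
  proof cases
    case 1 then show ?thesis using x Qk_gt by (auto simp: U_def)
  next
    case 2 then show ?thesis using left_step1[OF x] loc_right by (auto simp: U_def)
  next
    case 3 then show ?thesis using left_iter[OF x, of j] Q_ge[of j] loc_left[of j]
      by (auto simp: U_def)
  qed
qed

lemma right_orbitU: "x \<in> {0<..p k} \<Longrightarrow> i < k + 1 \<Longrightarrow> (h ^^ i) x \<in> U b"
proof -
  assume x: "x \<in> {0<..p k}" and i: "i < k + 1"
  have "i = 0 \<or> (i = (i - 1) + 1 \<and> i - 1 < k)" using i by arith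
  then consider "i = 0" | j where "i = j + 1" "j < k" by blast
  then show ?thesis
  proof cases
    case 1 then show ?thesis using x loc_right by (auto simp: U_def)
  next
    case 2 then show ?thesis using right_iter[OF x, of j] Q_ge[of j] loc_left[of j]
      by (auto simp: U_def)
  qed
qed

lemma rt_left: "x \<in> {Q k..<0} \<Longrightarrow> return_time (Q k) (p k) h x = k + 2"
  unfolding return_time_def
proof (rule Least_equality)
  assume x: "x \<in> {Q k..<0}"
  show "1 \<le> k + 2 \<and> (h ^^ (k + 2)) x \<in> {Q k..p k}" using left_iter[OF x, of k] by auto
  fix t assume t: "1 \<le> t \<and> (h ^^ t) x \<in> {Q k..p k}"
  show "k + 2 \<le> t"
  proof (rule ccontr)
    assume "\<not> k + 2 \<le> t"
    then have "t = 1 \<or> (t = (t - 2) + 2 \<and> t - 2 < k)" using t by arith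
    then consider "t = 1" | j where "t = j + 2" "j < k" by blast
    then show False
    proof cases
      case 1 then show ?thesis using t left_step1[OF x] Qp[of k] by auto
    next
      case 2
      have "(h ^^ t) x < p j" using left_iter[OF x, of j] 2 by auto
      moreover have "p j < Q (Suc j)" using Qp[of j] 2 by auto
      moreover have "Q (Suc j) \<le> Q k" using Q_mono[of "Suc j" k] 2 by auto
      ultimately show ?thesis using t by auto
    qed
  qed
qed

lemma rt_right: "x \<in> {0<..p k} \<Longrightarrow> return_time (Q k) (p k) h x = k + 1"
  unfolding return_time_def
proof (rule Least_equality)
  assume x: "x \<in> {0<..p k}"
  show "1 \<le> k + 1 \<and> (h ^^ (k + 1)) x \<in> {Q k..p k}" using right_iter[OF x, of k] by auto
  fix t assume t: "1 \<le> t \<and> (h ^^ t) x \<in> {Q k..p k}"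
  show "k + 1 \<le> t"
  proof (rule ccontr)
    assume "\<not> k + 1 \<le> t"
    then have "t = (t - 1) + 1 \<and> t - 1 < k" using t by arith
    then obtain j where j: "t = j + 1" "j < k" by blast
    have "(h ^^ t) x < p j" using right_iter[OF x, of j] j by auto
    moreover have "p j < Q (Suc j)" using Qp[of j] j by auto
    moreover have "Q (Suc j) \<le> Q k" using Q_mono[of "Suc j" k] j by auto
    ultimately show False using t by auto
  qed
qed

definition L where "L = p k - Q k"
definition bb where "bb = p k / L"
definition HH where "HH y = (h ^^ return_time (Q k) (p k) h (L * y)) (L * y) / L"

lemma renorm_eq: "renorm_k b h = k \<Longrightarrow> renorm (b, h) = (bb, HH)"
proof -
  assume rk: "renorm_k b h = k"
  have "renorm_interval b h = (Q k, p k)"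
    unfolding renorm_interval_def rk Let_def using rl pS[of k] by (simp add: Q_def)
  then show ?thesis unfolding renorm_def Let_def
    by (simp add: bb_def HH_def L_def fun_eq_iff)
qed

lemma L_pos: "0 < L" unfolding L_def using lk_neg loc_right by auto
lemma L_lt1: "L < 1" unfolding L_def using Qk_gt loc_right by auto
lemma bb1: "bb - 1 = Q k / L" unfolding bb_def using L_pos by (simp add: field_simps L_def)
lemma bb_pos: "0 < bb" unfolding bb_def using L_pos loc_right by auto
lemma bb1_neg: "bb - 1 < 0" unfolding bb1 using L_pos lk_neg by (simp add: divide_neg_pos)

lemma scale_left: "y \<in> {bb-1..<0} \<Longrightarrow> L * y \<in> {Q k..<0}"
  unfolding bb1 using L_pos by (auto simp: field_simps mult_pos_neg mult_neg_pos)
lemma scale_left': "y \<in> {bb-1<..<0} \<Longrightarrow> L * y \<in> {Q k<..<0}"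
  unfolding bb1 using L_pos by (auto simp: field_simps mult_pos_neg mult_neg_pos)
lemma scale_right: "y \<in> {0<..bb} \<Longrightarrow> L * y \<in> {0<..p k}"
  unfolding bb_def using L_pos by (auto simp: field_simps)
lemma scale_right': "y \<in> {0<..<bb} \<Longrightarrow> L * y \<in> {0<..<p k}"
  unfolding bb_def using L_pos by (auto simp: field_simps)

lemma HH_left: "y \<in> {bb-1..<0} \<Longrightarrow> HH y = (h ^^ k) (h (h (L * y))) / L"
  unfolding HH_def using rt_left[OF scale_left] funpow_plus2 by simp
lemma HH_right: "y \<in> {0<..bb} \<Longrightarrow> HH y = (h ^^ k) (h (L * y)) / L"
  unfolding HH_def using rt_right[OF scale_right] funpow_plus1 by simp

lemma I1_sub: "{b-1<..<h b} \<subseteq> I1" using g(10) by auto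

lemma lp1: "y \<in> {bb-1..<0} \<Longrightarrow> L * y \<in> {b-1..<0}"
  using scale_left Qk_gt by fastforce
lemma lp2: "y \<in> {bb-1..<0} \<Longrightarrow> h (L * y) \<in> {0<..b}"
  using scale_left left_step1 loc_right by fastforce
lemma lp3: "y \<in> {bb-1..<0} \<Longrightarrow> h (h (L * y)) \<in> I1"
  using scale_left left_step2 I1_sub by blast
lemma rp1: "y \<in> {0<..bb} \<Longrightarrow> L * y \<in> {0<..b}"
  using scale_right loc_right by fastforce
lemma rp2: "y \<in> {0<..bb} \<Longrightarrow> h (L * y) \<in> I1"
  using scale_right right_step1 I1_sub by blast

lemma left_img1: "(\<lambda>y. L * y) ` {bb-1..<0} \<subseteq> {b-1..<0}" using lp1 by blast
lemma left_img2: "(\<lambda>y. h (L * y)) ` {bb-1..<0} \<subseteq> {0<..b}" using lp2 by blast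
lemma left_img3: "(\<lambda>y. h (h (L * y))) ` {bb-1..<0} \<subseteq> I1" using lp3 by blast
lemma right_img1: "(\<lambda>y. L * y) ` {0<..bb} \<subseteq> {0<..b}" using rp1 by blast
lemma right_img2: "(\<lambda>y. h (L * y)) ` {0<..bb} \<subseteq> I1" using rp2 by blast

lemma HH_cont_left: "continuous_on {bb-1..<0} HH"
proof -
  have c1: "continuous_on {bb-1..<0} (\<lambda>y. L * y)" by (intro continuous_intros)
  have c2: "continuous_on {bb-1..<0} (\<lambda>y. h (L * y))"
    by (rule continuous_on_compose2[OF g(4) c1 left_img1])
  have c3: "continuous_on {bb-1..<0} (\<lambda>y. h (h (L * y)))"
    by (rule continuous_on_compose2[OF g(5) c2 left_img2])
  have c4: "continuous_on {bb-1..<0} (\<lambda>y. (h ^^ k) (h (h (L * y))))"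
    by (rule continuous_on_compose2[OF A1[OF order_refl] c3 left_img3])
  have "continuous_on {bb-1..<0} (\<lambda>y. (h ^^ k) (h (h (L * y))) / L)"
    using L_pos by (intro continuous_intros c4) auto
  then show ?thesis by (rule continuous_on_cong[THEN iffD1, OF refl, rotated]) (simp add: HH_left)
qed

lemma HH_cont_right: "continuous_on {0<..bb} HH"
proof -
  have c1: "continuous_on {0<..bb} (\<lambda>y. L * y)" by (intro continuous_intros)
  have c2: "continuous_on {0<..bb} (\<lambda>y. h (L * y))"
    by (rule continuous_on_compose2[OF g(5) c1 right_img1])
  have c4: "continuous_on {0<..bb} (\<lambda>y. (h ^^ k) (h (L * y)))"
    by (rule continuous_on_compose2[OF A1[OF order_refl] c2 right_img2])
  have "continuous_on {0<..bb} (\<lambda>y. (h ^^ k) (h (L * y)) / L)"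
    using L_pos by (intro continuous_intros c4) auto
  then show ?thesis by (rule continuous_on_cong[THEN iffD1, OF refl, rotated]) (simp add: HH_right)
qed

lemma HH_mono_left: "strict_mono_on {bb-1..<0} HH"
proof (rule strict_mono_onI)
  fix r s assume r: "r \<in> {bb-1..<0}" and s: "s \<in> {bb-1..<0}" and rs: "r < s"
  have "L * r < L * s" using rs L_pos by simp
  then have "h (L * r) < h (L * s)" using strict_mono_onD[OF g(6) lp1[OF r] lp1[OF s]] by blast
  then have "h (h (L * r)) < h (h (L * s))" using strict_mono_onD[OF g(7) lp2[OF r] lp2[OF s]] by blast
  then have "(h ^^ k) (h (h (L * r))) < (h ^^ k) (h (h (L * s)))"
    using strict_mono_onD[OF A2[OF order_refl] lp3[OF r] lp3[OF s]] by blast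
  then show "HH r < HH s" using HH_left r s L_pos by (simp add: divide_strict_right_mono)
qed

lemma HH_mono_right: "strict_mono_on {0<..bb} HH"
proof (rule strict_mono_onI)
  fix r s assume r: "r \<in> {0<..bb}" and s: "s \<in> {0<..bb}" and rs: "r < s"
  have "L * r < L * s" using rs L_pos by simp
  then have "h (L * r) < h (L * s)" using strict_mono_onD[OF g(7) rp1[OF r] rp1[OF s]] by blast
  then have "(h ^^ k) (h (L * r)) < (h ^^ k) (h (L * s))"
    using strict_mono_onD[OF A2[OF order_refl] rp2[OF r] rp2[OF s]] by blast
  then show "HH r < HH s" using HH_right r s L_pos by (simp add: divide_strict_right_mono)
qed

lemma scale_at_left: "filterlim (\<lambda>y. L * y) (at_left 0) (at_left 0)"
proof -
  have "((\<lambda>y. L * y) \<longlongrightarrow> 0) (at_left 0)"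
    by (rule tendsto_eq_intros refl | simp)+
  moreover have "\<forall>\<^sub>F y in at_left 0. L * y \<in> {..<0} \<and> L * y \<noteq> 0"
    using eventually_at_left_real[of "-1" 0] by (rule eventually_mono) (use L_pos in \<open>auto simp: mult_pos_neg\<close>)
  ultimately show ?thesis unfolding filterlim_at by auto
qed

lemma scale_at_right: "filterlim (\<lambda>y. L * y) (at_right 0) (at_right 0)"
proof -
  have "((\<lambda>y. L * y) \<longlongrightarrow> 0) (at_right 0)"
    by (rule tendsto_eq_intros refl | simp)+
  moreover have "\<forall>\<^sub>F y in at_right 0. L * y \<in> {0<..} \<and> L * y \<noteq> 0"
    using eventually_at_right_real[of 0 1] by (rule eventually_mono) (use L_pos in auto)
  ultimately show ?thesis unfolding filterlim_at by auto
qed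

lemma HH_lim_left: "(HH \<longlongrightarrow> bb) (at_left 0)"
proof -
  have ev: "\<forall>\<^sub>F y in at_left 0. y \<in> {bb-1<..<0}" using eventually_at_left_real[OF bb1_neg] .
  have l1: "((\<lambda>y. h (L * y)) \<longlongrightarrow> b) (at_left 0)"
    using filterlim_compose[OF g(8) scale_at_left] by simp
  have l2: "((\<lambda>y. h (h (L * y))) \<longlongrightarrow> h b) (at_left 0)"
    by (rule continuous_on_tendsto_compose[OF g(5) l1]) (use g(2) lp2 in \<open>auto intro: eventually_mono[OF ev]\<close>)
  have l3: "((\<lambda>y. (h ^^ k) (h (h (L * y)))) \<longlongrightarrow> (h ^^ k) (h b)) (at_left 0)"
    by (rule continuous_on_tendsto_compose[OF A1[OF order_refl] l2])
      (use hb_gt g(10) lp3 in \<open>auto intro: eventually_mono[OF ev]\<close>)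
  have l4: "((\<lambda>y. (h ^^ k) (h (h (L * y))) / L) \<longlongrightarrow> bb) (at_left 0)"
    unfolding bb_def p_def using tendsto_divide[OF l3 tendsto_const, of L] L_pos by simp
  show ?thesis
    by (rule Lim_transform_eventually[OF l4]) (auto intro: eventually_mono[OF ev] simp: HH_left)
qed

lemma HH_lim_right: "(HH \<longlongrightarrow> bb - 1) (at_right 0)"
proof -
  have ev: "\<forall>\<^sub>F y in at_right 0. y \<in> {0<..<bb}" using eventually_at_right_real[OF bb_pos] .
  have l1: "((\<lambda>y. h (L * y)) \<longlongrightarrow> b - 1) (at_right 0)"
    using filterlim_compose[OF g(9) scale_at_right] by simp
  have l3: "((\<lambda>y. (h ^^ k) (h (L * y))) \<longlongrightarrow> (h ^^ k) (b - 1)) (at_right 0)"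
    by (rule continuous_on_tendsto_compose[OF A1[OF order_refl] l1])
      (use hb_gt g(10) rp2 in \<open>auto intro: eventually_mono[OF ev]\<close>)
  have l4: "((\<lambda>y. (h ^^ k) (h (L * y)) / L) \<longlongrightarrow> bb - 1) (at_right 0)"
    unfolding bb1 Q_def using tendsto_divide[OF l3 tendsto_const, of L] L_pos by simp
  show ?thesis
    by (rule Lim_transform_eventually[OF l4]) (auto intro: eventually_mono[OF ev] simp: HH_right)
qed

lemma HH_range: "y \<in> {bb-1..bb} \<Longrightarrow> y \<noteq> 0 \<Longrightarrow> HH y \<in> {bb-1..bb}"
proof -
  assume y: "y \<in> {bb-1..bb}" "y \<noteq> 0"
  show ?thesis
  proof (cases "y < 0")
    case True
    then have y': "y \<in> {bb-1..<0}" using y by auto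
    have "Q k < (h ^^ (k + 2)) (L * y) \<and> (h ^^ (k + 2)) (L * y) < p k"
      using left_iter[OF scale_left[OF y'], of k] by simp
    then have "Q k / L \<le> HH y \<and> HH y \<le> p k / L"
      unfolding HH_left[OF y'] funpow_plus2[symmetric] using L_pos by (auto simp: divide_right_mono)
    then show ?thesis unfolding bb1[symmetric] bb_def by auto
  next
    case False
    then have y': "y \<in> {0<..bb}" using y by auto
    have "Q k < (h ^^ (k + 1)) (L * y) \<and> (h ^^ (k + 1)) (L * y) < p k"
      using right_iter[OF scale_right[OF y'], of k] by simp
    then have "Q k / L \<le> HH y \<and> HH y \<le> p k / L"
      unfolding HH_right[OF y'] funpow_plus1[symmetric] using L_pos by (auto simp: divide_right_mono)
    then show ?thesis unfolding bb1[symmetric] bb_def by auto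
  qed
qed

lemma HH_ends: "HH (bb - 1) > HH bb"
proof -
  have e1: "bb - 1 \<in> {bb-1..<0}" using bb1_neg by auto
  have e2: "bb \<in> {0<..bb}" using bb_pos by auto
  have Ly1: "L * (bb - 1) = Q k" unfolding bb1 using L_pos by simp
  have Ly2: "L * bb = p k" unfolding bb_def using L_pos by simp
  have "h (p k) < h (h (Q k))"
  proof -
    have "h (Q k) = Q (Suc k)" unfolding Q_def by simp
    moreover have "p k < Q (Suc k)" using Qp[of k] by simp
    ultimately show ?thesis using loc_right strict_mono_onD[OF g(7), of "p k" "Q (Suc k)"] by auto
  qed
  moreover have "h (p k) \<in> I1" using rp2[OF e2] Ly2 by simp
  moreover have "h (h (Q k)) \<in> I1" using lp3[OF e1] Ly1 by simp
  ultimately have "(h ^^ k) (h (p k)) < (h ^^ k) (h (h (Q k)))"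
    using strict_mono_onD[OF A2[OF order_refl]] by blast
  then show ?thesis unfolding HH_left[OF e1] HH_right[OF e2] Ly1 Ly2
    using L_pos by (simp add: divide_strict_right_mono)
qed

lemma HH_gap: "gap_map bb HH"
  unfolding gap_map_def using bb1_neg bb_pos HH_range HH_cont_left HH_cont_right
    HH_mono_left HH_mono_right HH_lim_left HH_lim_right HH_ends by auto

lemma HH_SM:
  assumes sm: "SM b h \<nu> M K" and nu: "0 \<le> \<nu>" "\<nu> \<le> 1" and MK: "0 \<le> M" "0 \<le> K"
    and Cb: "\<forall>m\<ge>2. real m ^ 2 * \<nu> ^ (m - 1) \<le> Cst"
  shows "SM bb HH (\<nu>^2) (M * Cst) ((K + 3 * M^2) * Cst)"
proof -
  obtain D1 D2 D3 where HD: "\<And>x. x \<in> U b \<Longrightarrow> (h has_real_derivative D1 x) (at x) \<and>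
      (D1 has_real_derivative D2 x) (at x) \<and> (D2 has_real_derivative D3 x) (at x) \<and>
      \<bar>D1 x\<bar> \<le> \<nu> \<and> \<bar>D2 x\<bar> \<le> M \<and> \<bar>D3 x\<bar> \<le> K"
    using sm unfolding SM_def by blast
  define F1 where "F1 y = (if y < 0 then e1 h D1 D2 D3 (k+2) (L * y) else e1 h D1 D2 D3 (k+1) (L * y))" for y
  define F2 where "F2 y = (if y < 0 then L * e2 h D1 D2 D3 (k+2) (L * y) else L * e2 h D1 D2 D3 (k+1) (L * y))" for y
  define F3 where "F3 y = (if y < 0 then L^2 * e3 h D1 D2 D3 (k+2) (L * y) else L^2 * e3 h D1 D2 D3 (k+1) (L * y))" for y
  have L1: "L \<le> 1" using L_lt1 by simp
  show ?thesis unfolding SM_def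
  proof (intro exI ballI)
    fix y assume y: "y \<in> U bb"
    show "(HH has_real_derivative F1 y) (at y) \<and> (F1 has_real_derivative F2 y) (at y) \<and>
       (F2 has_real_derivative F3 y) (at y) \<and> \<bar>F1 y\<bar> \<le> \<nu>^2 \<and> \<bar>F2 y\<bar> \<le> M * Cst \<and> \<bar>F3 y\<bar> \<le> (K + 3 * M^2) * Cst"
    proof (cases "y < 0")
      case True
      then have yV: "y \<in> {bb-1<..<0}" using y unfolding U_def by auto
      show ?thesis
      proof (rule branch_deriv[OF HD nu MK L_pos L1, where m="k+2" and C=Cst and V="{bb-1<..<0}"])
        show "real (k + 2) ^ 2 * \<nu> ^ (k + 2 - 1) \<le> Cst" using Cb[rule_format, of "k+2"] by simp
        fix z i assume "z \<in> {bb-1<..<0}" "i < k + 2"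
        then show "(h ^^ i) (L * z) \<in> U b" using left_orbitU scale_left by auto
      next
        fix z assume z: "z \<in> {bb-1<..<0}"
        then show "HH z = (h ^^ (k + 2)) (L * z) / L" unfolding HH_def using rt_left scale_left by auto
        show "F1 z = e1 h D1 D2 D3 (k + 2) (L * z)" using z by (simp add: F1_def)
        show "F2 z = L * e2 h D1 D2 D3 (k + 2) (L * z)" using z by (simp add: F2_def)
      qed (use yV True in \<open>auto simp: F3_def\<close>)
    next
      case False
      then have yV: "y \<in> {0<..<bb}" using y unfolding U_def by auto
      show ?thesis
      proof (rule branch_deriv[OF HD nu MK L_pos L1, where m="k+1" and C=Cst and V="{0<..<bb}"])
        show "real (k + 1) ^ 2 * \<nu> ^ (k + 1 - 1) \<le> Cst" using Cb[rule_format, of "k+1"] k1 by simp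
        fix z i assume "z \<in> {0<..<bb}" "i < k + 1"
        then show "(h ^^ i) (L * z) \<in> U b" using right_orbitU scale_right by auto
      next
        fix z assume z: "z \<in> {0<..<bb}"
        then show "HH z = (h ^^ (k + 1)) (L * z) / L" unfolding HH_def using rt_right scale_right by auto
        show "F1 z = e1 h D1 D2 D3 (k + 1) (L * z)" using z by (simp add: F1_def)
        show "F2 z = L * e2 h D1 D2 D3 (k + 1) (L * z)" using z by (simp add: F2_def)
      qed (use yV False k1 in \<open>auto simp: F3_def\<close>)
    qed
  qed
qed

end


definition rfl :: "real \<times> (real \<Rightarrow> real) \<Rightarrow> real \<times> (real \<Rightarrow> real)" where
  "rfl m = (1 - fst m, \<lambda>x. - snd m (- x))"

lemma rfl_rfl: "rfl (rfl m) = m" unfolding rfl_def by (cases m) auto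

lemma closure_neg: "closure (uminus ` (S :: real set)) = uminus ` closure S"
proof -
  have e: "\<And>T. (\<lambda>x::real. (-1) *\<^sub>R x) ` T = uminus ` T" by simp
  show ?thesis using closure_scaleR[of "-1::real" S] unfolding e by simp
qed

lemma gap_rfl:
  assumes "gap_map b h"
  shows "gap_map (1 - b) (\<lambda>x. - h (- x))"
proof -
  note g = gm_basic[OF assms]
  have c1: "continuous_on {1-b-1..<0} (\<lambda>x. - h (- x))"
  proof -
    have "continuous_on {1-b-1..<0} (\<lambda>x. h (- x))"
      by (rule continuous_on_compose2[OF g(5)]) (auto intro: continuous_intros)
    then show ?thesis by (intro continuous_intros)
  qed
  have c2: "continuous_on {0<..1-b} (\<lambda>x. - h (- x))"
  proof -
    have "continuous_on {0<..1-b} (\<lambda>x. h (- x))"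
      by (rule continuous_on_compose2[OF g(4)]) (auto intro: continuous_intros)
    then show ?thesis by (intro continuous_intros)
  qed
  have m1: "strict_mono_on {1-b-1..<0} (\<lambda>x. - h (- x))"
    by (rule strict_mono_onI) (use strict_mono_onD[OF g(7)] in auto)
  have m2: "strict_mono_on {0<..1-b} (\<lambda>x. - h (- x))"
    by (rule strict_mono_onI) (use strict_mono_onD[OF g(6)] in auto)
  have l1: "((\<lambda>x. - h (- x)) \<longlongrightarrow> 1 - b) (at_left 0)"
    unfolding filterlim_at_left_to_right[where a=0] using tendsto_minus[OF g(9)] by simp
  have l2: "((\<lambda>x. - h (- x)) \<longlongrightarrow> 1 - b - 1) (at_right 0)"
  proof -
    have "at_right (0::real) = filtermap uminus (at_left 0)" using at_right_minus[of 0] by simp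
    then show ?thesis using tendsto_minus[OF g(8)] by (simp add: filterlim_filtermap o_def)
  qed
  have r: "\<And>x. x \<in> {1-b-1..1-b} \<Longrightarrow> x \<noteq> 0 \<Longrightarrow> - h (- x) \<in> {1-b-1..1-b}"
  proof -
    fix x :: real assume "x \<in> {1-b-1..1-b}" "x \<noteq> 0"
    then have "h (- x) \<in> {b-1..b}" using g(3)[of "-x"] by auto
    then show "- h (- x) \<in> {1-b-1..1-b}" by auto
  qed
  show ?thesis unfolding gap_map_def using g c1 c2 m1 m2 l1 l2 r by auto
qed

lemma U_rfl: "x \<in> U (1 - b) \<longleftrightarrow> - x \<in> U b" unfolding U_def by auto

lemma SM_rfl:
  assumes "SM b h \<nu> M K"
  shows "SM (1 - b) (\<lambda>x. - h (- x)) \<nu> M K"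
proof -
  obtain D1 D2 D3 where HD: "\<And>x. x \<in> U b \<Longrightarrow> (h has_real_derivative D1 x) (at x) \<and>
      (D1 has_real_derivative D2 x) (at x) \<and> (D2 has_real_derivative D3 x) (at x) \<and>
      \<bar>D1 x\<bar> \<le> \<nu> \<and> \<bar>D2 x\<bar> \<le> M \<and> \<bar>D3 x\<bar> \<le> K"
    using assms unfolding SM_def by blast
  have "\<forall>x\<in>U (1 - b). ((\<lambda>x. - h (- x)) has_real_derivative D1 (- x)) (at x) \<and>
      ((\<lambda>x. D1 (- x)) has_real_derivative - D2 (- x)) (at x) \<and>
      ((\<lambda>x. - D2 (- x)) has_real_derivative D3 (- x)) (at x) \<and>
      \<bar>D1 (- x)\<bar> \<le> \<nu> \<and> \<bar>- D2 (- x)\<bar> \<le> M \<and> \<bar>D3 (- x)\<bar> \<le> K"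
  proof
    fix x assume "x \<in> U (1 - b)"
    then have H: "(h has_real_derivative D1 (-x)) (at (-x)) \<and>
      (D1 has_real_derivative D2 (-x)) (at (-x)) \<and> (D2 has_real_derivative D3 (-x)) (at (-x)) \<and>
      \<bar>D1 (-x)\<bar> \<le> \<nu> \<and> \<bar>D2 (-x)\<bar> \<le> M \<and> \<bar>D3 (-x)\<bar> \<le> K" using HD U_rfl by blast
    have dm: "((\<lambda>x. - x) has_real_derivative -1) (at x)" by (rule derivative_eq_intros refl | simp)+
    have a1: "((\<lambda>x. - h (- x)) has_real_derivative D1 (- x)) (at x)"
      using DERIV_minus[OF DERIV_chain2[OF _ dm, of h]] H by simp
    have a2: "((\<lambda>x. D1 (- x)) has_real_derivative - D2 (- x)) (at x)"
      using DERIV_chain2[OF _ dm, of D1] H by simp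
    have a3: "((\<lambda>x. - D2 (- x)) has_real_derivative D3 (- x)) (at x)"
      using DERIV_minus[OF DERIV_chain2[OF _ dm, of D2]] H by simp
    show "((\<lambda>x. - h (- x)) has_real_derivative D1 (- x)) (at x) \<and>
      ((\<lambda>x. D1 (- x)) has_real_derivative - D2 (- x)) (at x) \<and>
      ((\<lambda>x. - D2 (- x)) has_real_derivative D3 (- x)) (at x) \<and>
      \<bar>D1 (- x)\<bar> \<le> \<nu> \<and> \<bar>- D2 (- x)\<bar> \<le> M \<and> \<bar>D3 (- x)\<bar> \<le> K"
      using a1 a2 a3 H by simp
  qed
  then show ?thesis unfolding SM_def
    by (intro exI[of _ "\<lambda>x. D1 (- x)"] exI[of _ "\<lambda>x. - D2 (- x)"] exI[of _ "\<lambda>x. D3 (- x)"]) simp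
qed

lemma funpow_rfl: fixes h :: "real \<Rightarrow> real" shows "((\<lambda>x. - h (- x)) ^^ i) x = - (h ^^ i) (- x)"
  by (induction i arbitrary: x) (simp_all add: o_def)

lemma funpow_rfl_img: fixes h :: "real \<Rightarrow> real" shows "((\<lambda>x. - h (- x)) ^^ i) ` (uminus ` S) = uminus ` ((h ^^ i) ` S)"
  unfolding image_image funpow_rfl by simp

lemma gap_interval_rfl: fixes h :: "real \<Rightarrow> real" shows "gap_interval (1 - b) (\<lambda>x. - h (- x)) = uminus ` gap_interval b h"
  unfolding gap_interval_def by (auto simp: image_iff intro: exI[of _ "- _"])

lemma cl_rfl: fixes h :: "real \<Rightarrow> real" shows "closure (((\<lambda>x. - h (- x)) ^^ i) ` gap_interval (1 - b) (\<lambda>x. - h (- x)))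
   = uminus ` closure ((h ^^ i) ` gap_interval b h)"
  unfolding gap_interval_rfl funpow_rfl_img closure_neg ..

lemma neg_sub_iff: "uminus ` (A :: real set) \<subseteq> B \<longleftrightarrow> A \<subseteq> uminus ` B"
proof
  assume "uminus ` A \<subseteq> B"
  then show "A \<subseteq> uminus ` B" by (auto simp: image_iff) (metis add.inverse_inverse subsetD imageI)
qed (auto simp: image_iff)

lemma rl_rfl: fixes h :: "real \<Rightarrow> real" shows "renorm_left (1 - b) (\<lambda>x. - h (- x)) k \<longleftrightarrow> renorm_right b h k"
  unfolding renorm_left_def renorm_right_def cl_rfl neg_sub_iff
  by (auto simp: image_iff)

lemma rr_rfl: fixes h :: "real \<Rightarrow> real" shows "renorm_right (1 - b) (\<lambda>x. - h (- x)) k \<longleftrightarrow> renorm_left b h k"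
  unfolding renorm_left_def renorm_right_def cl_rfl neg_sub_iff
  by (auto simp: image_iff)

lemma rc_rfl: fixes h :: "real \<Rightarrow> real"
  shows "renorm_cond (1 - b) (\<lambda>x. - h (- x)) k \<longleftrightarrow> renorm_cond b h k"
  unfolding renorm_cond_def rl_rfl rr_rfl by auto

lemma rk_rfl: fixes h :: "real \<Rightarrow> real"
  shows "renorm_k (1 - b) (\<lambda>x. - h (- x)) = renorm_k b h"
  unfolding renorm_k_def rc_rfl ..

lemma rt_rfl: fixes h :: "real \<Rightarrow> real"
  shows "return_time (- r) (- l) (\<lambda>x. - h (- x)) x = return_time l r h (- x)"
  unfolding return_time_def funpow_rfl by (rule arg_cong[where f=Least]) (auto simp: fun_eq_iff)

lemma renorm_rfl:
  fixes h :: "real \<Rightarrow> real"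
  assumes rr: "\<not> renorm_left b h k" and rl': "renorm_left (1 - b) (\<lambda>x. - h (- x)) k"
    and rk: "renorm_k b h = k"
    and ne: "(h ^^ k) b - (h ^^ (k + 1)) (b - 1) \<noteq> 0"
  shows "renorm (1 - b, \<lambda>x. - h (- x)) = rfl (renorm (b, h))"
proof -
  define l where "l = (h ^^ (k + 1)) (b - 1)"
  define r where "r = (h ^^ k) b"
  have i1: "renorm_interval b h = (l, r)"
    unfolding renorm_interval_def rk Let_def l_def r_def using rr by simp
  have i2: "renorm_interval (1 - b) (\<lambda>x. - h (- x)) = (- r, - l)"
    unfolding renorm_interval_def rk_rfl rk Let_def l_def r_def using rl' by (simp add: funpow_rfl)
  have ne': "r - l \<noteq> 0" using ne unfolding l_def r_def .
  have fst_eq: "- l / (- l - - r) = 1 - r / (r - l)" using ne' by (simp add: field_simps)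
  have e1: "renorm (b, h) = (r / (r - l), \<lambda>y. (h ^^ return_time l r h ((r - l) * y)) ((r - l) * y) / (r - l))"
    by (simp add: renorm_def i1 Let_def)
  have e2: "renorm (1 - b, \<lambda>x. - h (- x)) = (- l / (- l - - r), \<lambda>y. ((\<lambda>x. - h (- x)) ^^ return_time (- r) (- l) (\<lambda>x. - h (- x)) ((- l - - r) * y)) ((- l - - r) * y) / (- l - - r))"
    by (simp add: renorm_def i2 Let_def)
  have e3: "- l - - r = r - l" by simp
  show ?thesis unfolding e1 e2 rfl_def e3 rt_rfl funpow_rfl
    using fst_eq by (simp add: fun_eq_iff)
qed

lemma step:
  fixes h :: "real \<Rightarrow> real"
  assumes gm: "gap_map b h" and sm: "SM b h \<nu> M K" and nu: "0 \<le> \<nu>" "\<nu> \<le> 1"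
    and MK: "0 \<le> M" "0 \<le> K" and Cb: "\<forall>m\<ge>2. real m ^ 2 * \<nu> ^ (m - 1) \<le> Cst"
    and ren: "renormalizable (b, h)"
  shows "gap_map (fst (renorm (b, h))) (snd (renorm (b, h))) \<and>
         SM (fst (renorm (b, h))) (snd (renorm (b, h))) (\<nu>^2) (M * Cst) ((K + 3 * M^2) * Cst)"
proof -
  define k where "k = renorm_k b h"
  have rc: "renorm_cond b h k"
    using ren unfolding renormalizable_def k_def renorm_k_def by (auto intro: LeastI_ex)
  then have k1: "1 \<le> k" unfolding renorm_cond_def by simp
  show ?thesis
  proof (cases "renorm_left b h k")
    case True
    interpret leftcase b h k using gm True k1 by unfold_locales
    have "renorm (b, h) = (bb, HH)" using renorm_eq k_def by simp
    then show ?thesis using HH_gap HH_SM[OF sm nu MK Cb] by simp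
  next
    case False
    then have rr: "renorm_right b h k" using rc unfolding renorm_cond_def by simp
    let ?h = "\<lambda>x. - h (- x)"
    have rl': "renorm_left (1 - b) ?h k" using rr rl_rfl by blast
    interpret R: leftcase "1 - b" ?h k using gap_rfl[OF gm] rl' k1 by unfold_locales
    have rk': "renorm_k (1 - b) ?h = k" using rk_rfl k_def by simp
    have ne: "(h ^^ k) b - (h ^^ (k + 1)) (b - 1) \<noteq> 0"
    proof -
      have "R.L = (h ^^ k) b - (h ^^ (k + 1)) (b - 1)"
        unfolding R.L_def R.p_def R.Q_def funpow_rfl
        by (simp add: funpow_Suc_right del: funpow.simps)
      then show ?thesis using R.L_pos by simp
    qed
    have eq: "renorm (1 - b, ?h) = rfl (renorm (b, h))"
      by (rule renorm_rfl[OF False rl' k_def[symmetric] ne])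
    have "renorm (1 - b, ?h) = (R.bb, R.HH)" using R.renorm_eq rk' by simp
    then have X: "gap_map (fst (rfl (renorm (b, h)))) (snd (rfl (renorm (b, h)))) \<and>
         SM (fst (rfl (renorm (b, h)))) (snd (rfl (renorm (b, h)))) (\<nu>^2) (M * Cst) ((K + 3 * M^2) * Cst)"
      using R.HH_gap R.HH_SM[OF SM_rfl[OF sm] nu MK Cb] eq by simp
    have Y: "renorm (b, h) = rfl (rfl (renorm (b, h)))" by (simp add: rfl_rfl)
    show ?thesis
      apply (subst (1 2 3 4) Y)
      using gap_rfl[OF X[THEN conjunct1]] SM_rfl[OF X[THEN conjunct2]]
      by (simp add: rfl_def)
  qed
qed


lemma mvt_left:
  assumes sm: "\<And>y. y \<in> U b \<Longrightarrow> (h has_real_derivative D1 y) (at y) \<and> \<bar>D1 y\<bar> \<le> \<nu>"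
    and lim: "(h \<longlongrightarrow> b) (at_left 0)" and x: "x \<in> {b-1<..<0}"
  shows "\<bar>h x - b\<bar> \<le> \<nu> * (- x)"
proof -
  have ev: "\<forall>\<^sub>F y in at_left 0. y \<in> {x<..<0}" using eventually_at_left_real[of x 0] x by auto
  have "\<bar>b - h x\<bar> \<le> \<nu> * (0 - x)"
  proof (rule tendsto_le[OF trivial_limit_at_left_real])
    show "((\<lambda>y. \<bar>h y - h x\<bar>) \<longlongrightarrow> \<bar>b - h x\<bar>) (at_left 0)"
      by (intro tendsto_intros lim)
    show "((\<lambda>y. \<nu> * (y - x)) \<longlongrightarrow> \<nu> * (0 - x)) (at_left 0)"
      by (intro tendsto_intros)
    show "\<forall>\<^sub>F y in at_left 0. \<bar>h y - h x\<bar> \<le> \<nu> * (y - x)"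
    proof (rule eventually_mono[OF ev])
      fix y assume y: "y \<in> {x<..<0}"
      have "\<exists>z>x. z < y \<and> h y - h x = (y - x) * D1 z"
        by (rule MVT2) (use y x sm in \<open>auto simp: U_def\<close>)
      then obtain z where z: "x < z" "z < y" "h y - h x = (y - x) * D1 z" by blast
      have "\<bar>D1 z\<bar> \<le> \<nu>" using sm[of z] z x y by (auto simp: U_def)
      then show "\<bar>h y - h x\<bar> \<le> \<nu> * (y - x)" using z y
        by (simp add: abs_mult mult.commute mult_left_mono)
    qed
  qed
  then show ?thesis by (simp add: abs_minus_commute)
qed

lemma mvt_right:
  assumes sm: "\<And>y. y \<in> U b \<Longrightarrow> (h has_real_derivative D1 y) (at y) \<and> \<bar>D1 y\<bar> \<le> \<nu>"
    and lim: "(h \<longlongrightarrow> b - 1) (at_right 0)" and x: "x \<in> {0<..<b}"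
  shows "\<bar>h x - (b - 1)\<bar> \<le> \<nu> * x"
proof -
  have ev: "\<forall>\<^sub>F y in at_right 0. y \<in> {0<..<x}" using eventually_at_right_real[of 0 x] x by auto
  have "\<bar>h x - (b - 1)\<bar> \<le> \<nu> * (x - 0)"
  proof (rule tendsto_le[OF trivial_limit_at_right_real])
    show "((\<lambda>y. \<bar>h x - h y\<bar>) \<longlongrightarrow> \<bar>h x - (b - 1)\<bar>) (at_right 0)"
      by (intro tendsto_intros lim)
    show "((\<lambda>y. \<nu> * (x - y)) \<longlongrightarrow> \<nu> * (x - 0)) (at_right 0)"
      by (intro tendsto_intros)
    show "\<forall>\<^sub>F y in at_right 0. \<bar>h x - h y\<bar> \<le> \<nu> * (x - y)"
    proof (rule eventually_mono[OF ev])
      fix y assume y: "y \<in> {0<..<x}"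
      have "\<exists>z>y. z < x \<and> h x - h y = (x - y) * D1 z"
        by (rule MVT2) (use y x sm in \<open>auto simp: U_def\<close>)
      then obtain z where z: "y < z" "z < x" "h x - h y = (x - y) * D1 z" by blast
      have "\<bar>D1 z\<bar> \<le> \<nu>" using sm[of z] z x y by (auto simp: U_def)
      then show "\<bar>h x - h y\<bar> \<le> \<nu> * (x - y)" using z y
        by (simp add: abs_mult mult.commute mult_left_mono)
    qed
  qed
  then show ?thesis by simp
qed

lemma deriv_on_open:
  assumes "open S" "\<And>y. y \<in> S \<Longrightarrow> (f has_real_derivative f' y) (at y)"
  shows "\<And>y. y \<in> S \<Longrightarrow> deriv f y = f' y"
  using assms DERIV_imp_deriv by blast

lemma approx:
  fixes h :: "real \<Rightarrow> real"
  assumes gm: "gap_map b h" and sm: "SM b h \<nu> M K" and e: "0 < \<epsilon>"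
    and b: "\<nu> \<le> \<epsilon> / 2" "M \<le> \<epsilon>" "K \<le> \<epsilon>"
  shows "\<exists>g. affine_gap_map b g \<and> C3_norm b (\<lambda>x. h x - g x) \<le> ereal \<epsilon>"
proof -
  note gg = gm_basic[OF gm]
  obtain D1 D2 D3 where HD: "\<And>x. x \<in> U b \<Longrightarrow> (h has_real_derivative D1 x) (at x) \<and>
      (D1 has_real_derivative D2 x) (at x) \<and> (D2 has_real_derivative D3 x) (at x) \<and>
      \<bar>D1 x\<bar> \<le> \<nu> \<and> \<bar>D2 x\<bar> \<le> M \<and> \<bar>D3 x\<bar> \<le> K"
    using sm unfolding SM_def by blast
  define s where "s = min (\<epsilon>/2) (1/2)"
  have s: "0 < s" "s \<le> \<epsilon>/2" "s < 1" using e by (auto simp: s_def)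
  define g where "g x = (if x < 0 then b + s * x else (b - 1) + s * x)" for x
  have gl: "\<And>x. x < 0 \<Longrightarrow> g x = b + s * x" and gr: "\<And>x. \<not> x < 0 \<Longrightarrow> g x = (b - 1) + s * x"
    by (simp_all add: g_def)
  have gap_g: "gap_map b g"
    unfolding gap_map_def
  proof (intro conjI)
    show "b - 1 < 0" "0 < b" using gg by auto
    show "\<forall>x\<in>{b - 1..b} - {0}. g x \<in> {b - 1..b}"
    proof
      fix x assume x: "x \<in> {b - 1..b} - {0}"
      show "g x \<in> {b - 1..b}"
      proof (cases "x < 0")
        case True
        have "s * x \<ge> -1" using x s gg(1,2) True
          by (smt (verit, ccfv_SIG) mult_left_le_one_le mult_minus_right atLeastAtMost_iff Diff_iff)
        moreover have "s * x \<le> 0" using True s by (simp add: mult_pos_neg less_imp_le)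
        ultimately show ?thesis using True by (simp add: gl)
      next
        case False
        have "s * x \<le> 1" using x s gg(1,2) False
          by (smt (verit, ccfv_SIG) mult_left_le_one_le atLeastAtMost_iff Diff_iff)
        moreover have "s * x \<ge> 0" using False s by simp
        ultimately show ?thesis using False by (simp add: gr)
      qed
    qed
    have "continuous_on {b - 1..<0} (\<lambda>x. b + s * x)" by (intro continuous_intros)
    then show "continuous_on {b - 1..<0} g"
      by (rule continuous_on_cong[THEN iffD1, OF refl, rotated]) (simp add: gl)
    have "continuous_on {0<..b} (\<lambda>x. (b - 1) + s * x)" by (intro continuous_intros)
    then show "continuous_on {0<..b} g"
      by (rule continuous_on_cong[THEN iffD1, OF refl, rotated]) (simp add: gr)
    show "strict_mono_on {b - 1..<0} g" by (rule strict_mono_onI) (use s in \<open>auto simp: gl\<close>)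
    show "strict_mono_on {0<..b} g" by (rule strict_mono_onI) (use s in \<open>auto simp: gr\<close>)
    show "(g \<longlongrightarrow> b) (at_left 0)"
    proof (rule Lim_transform_eventually)
      show "((\<lambda>x. b + s * x) \<longlongrightarrow> b) (at_left 0)" by (rule tendsto_eq_intros refl | simp)+
      show "\<forall>\<^sub>F x in at_left 0. b + s * x = g x"
        using eventually_at_left_real[of "-1" 0] by (rule eventually_mono) (auto simp: gl)
    qed
    show "(g \<longlongrightarrow> b - 1) (at_right 0)"
    proof (rule Lim_transform_eventually)
      show "((\<lambda>x. (b - 1) + s * x) \<longlongrightarrow> b - 1) (at_right 0)" by (rule tendsto_eq_intros refl | simp)+
      show "\<forall>\<^sub>F x in at_right 0. (b - 1) + s * x = g x"
        using eventually_at_right_real[of 0 1] by (rule eventually_mono) (auto simp: gr)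
    qed
    show "g b < g (b - 1)" using gg(1,2) s by (simp add: gl gr algebra_simps)
  qed
  have aff: "affine_gap_map b g"
  proof -
    have "(\<forall>x\<in>{b-1..<0}. g x = s * x + b) \<and> (\<forall>x\<in>{0<..b}. g x = s * x + (b - 1))"
      by (auto simp: gl gr)
    then show ?thesis unfolding affine_gap_map_def using gap_g by blast
  qed
  define \<phi> where "\<phi> x = h x - g x" for x
  have oU: "open (U b)" unfolding U_def by auto
  have dg: "\<And>y. y \<in> U b \<Longrightarrow> (g has_real_derivative s) (at y)"
  proof -
    fix y assume y: "y \<in> U b"
    show "(g has_real_derivative s) (at y)"
    proof (cases "y < 0")
      case True
      have "((\<lambda>x. b + s * x) has_real_derivative s) (at y)" by (rule derivative_eq_intros refl | simp)+
      then show ?thesis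
        by (rule has_field_derivative_transform_within_open[of _ _ _ "{..<0}"]) (use True in \<open>auto simp: gl\<close>)
    next
      case False
      then have y0: "0 < y" using y by (auto simp: U_def)
      have "((\<lambda>x. (b - 1) + s * x) has_real_derivative s) (at y)" by (rule derivative_eq_intros refl | simp)+
      then show ?thesis
        by (rule has_field_derivative_transform_within_open[of _ _ _ "{0<..}"]) (use y0 in \<open>auto simp: gr\<close>)
    qed
  qed
  have d1: "\<And>y. y \<in> U b \<Longrightarrow> (\<phi> has_real_derivative D1 y - s) (at y)"
    unfolding \<phi>_def[abs_def] using HD dg by (blast intro: DERIV_diff)
  have e1: "\<And>y. y \<in> U b \<Longrightarrow> deriv \<phi> y = D1 y - s" using d1 DERIV_imp_deriv by blast
  have d2: "\<And>y. y \<in> U b \<Longrightarrow> (deriv \<phi> has_real_derivative D2 y) (at y)"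
  proof -
    fix y assume y: "y \<in> U b"
    have "((\<lambda>x. D1 x - s) has_real_derivative D2 y) (at y)"
      using HD[OF y] by (auto intro!: derivative_eq_intros)
    then show "(deriv \<phi> has_real_derivative D2 y) (at y)"
      by (rule has_field_derivative_transform_within_open[OF _ oU y]) (simp add: e1)
  qed
  have e2: "\<And>y. y \<in> U b \<Longrightarrow> deriv (deriv \<phi>) y = D2 y" using d2 DERIV_imp_deriv by blast
  have d3: "\<And>y. y \<in> U b \<Longrightarrow> (deriv (deriv \<phi>) has_real_derivative D3 y) (at y)"
  proof -
    fix y assume y: "y \<in> U b"
    show "(deriv (deriv \<phi>) has_real_derivative D3 y) (at y)"
      using has_field_derivative_transform_within_open[OF _ oU y, of D2 "D3 y"] HD[OF y] e2 by simp
  qed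
  have e3: "\<And>y. y \<in> U b \<Longrightarrow> deriv (deriv (deriv \<phi>)) y = D3 y" using d3 DERIV_imp_deriv by blast
  have b0: "\<And>y. y \<in> U b \<Longrightarrow> \<bar>\<phi> y\<bar> \<le> \<epsilon>"
  proof -
    fix y assume y: "y \<in> U b"
    have sm1: "\<And>y. y \<in> U b \<Longrightarrow> (h has_real_derivative D1 y) (at y) \<and> \<bar>D1 y\<bar> \<le> \<nu>" using HD by blast
    have nu0: "0 \<le> \<nu>" using HD[OF y] by linarith
    show "\<bar>\<phi> y\<bar> \<le> \<epsilon>"
    proof (cases "y < 0")
      case True
      then have yl: "y \<in> {b-1<..<0}" using y by (auto simp: U_def)
      have A: "\<bar>h y - b\<bar> \<le> \<nu> * (- y)" by (rule mvt_left[OF sm1 gg(8) yl])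
      have y1: "- y \<le> 1" using yl gg(2) by auto
      have "\<nu> * (- y) \<le> \<nu>" using mult_left_le[OF y1 nu0] .
      moreover have "\<bar>s * y\<bar> \<le> s" using mult_left_le[OF y1, of s] s True by (simp add: abs_mult)
      moreover have "s * y \<le> 0" using s True by (simp add: mult_pos_neg less_imp_le)
      ultimately show ?thesis using A b s unfolding \<phi>_def gl[OF True] by (simp add: abs_le_iff; linarith)
    next
      case False
      then have yr: "y \<in> {0<..<b}" using y by (auto simp: U_def)
      have A: "\<bar>h y - (b - 1)\<bar> \<le> \<nu> * y" by (rule mvt_right[OF sm1 gg(9) yr])
      have y1: "y \<le> 1" using yr gg(1) by auto
      have "\<nu> * y \<le> \<nu>" using nu0 y1 yr by (simp add: mult_left_le)
      moreover have "\<bar>s * y\<bar> \<le> s" using s y1 yr by (simp add: abs_mult mult_left_le)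
      moreover have "0 \<le> s * y" using s yr by simp
      ultimately show ?thesis using A b s unfolding \<phi>_def gr[OF False] by (simp add: abs_le_iff; linarith)
    qed
  qed
  have bnd: "\<And>n y. n \<in> {0..3} \<Longrightarrow> y \<in> U b \<Longrightarrow> \<bar>(deriv ^^ n) \<phi> y\<bar> \<le> \<epsilon>"
  proof -
    fix n :: nat and y assume n: "n \<in> {0..3}" and y: "y \<in> U b"
    have "n = 0 \<or> n = Suc 0 \<or> n = Suc (Suc 0) \<or> n = Suc (Suc (Suc 0))" using n by auto
    then show "\<bar>(deriv ^^ n) \<phi> y\<bar> \<le> \<epsilon>"
    proof (elim disjE)
      assume "n = 0" then show ?thesis using b0[OF y] by simp
    next
      assume "n = Suc 0"
      then show ?thesis using e1[OF y] HD[OF y] b s by (simp add: abs_le_iff; linarith)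
    next
      assume "n = Suc (Suc 0)"
      then show ?thesis using e2[OF y] HD[OF y] b by simp
    next
      assume "n = Suc (Suc (Suc 0))"
      then show ?thesis using e3[OF y] HD[OF y] b by simp
    qed
  qed
  have "C3_norm b \<phi> \<le> ereal \<epsilon>"
    unfolding C3_norm_def SUP_le_iff using bnd by (auto simp: U_def)
  then show ?thesis using aff unfolding \<phi>_def[abs_def] by blast
qed


lemma cont_bound:
  fixes F :: "real \<Rightarrow> real"
  assumes "continuous_on {a..c} F"
  shows "\<exists>B\<ge>0. \<forall>x\<in>{a..c}. \<bar>F x\<bar> \<le> B"
proof -
  have "bounded (F ` {a..c})" by (rule compact_imp_bounded[OF compact_continuous_image[OF assms compact_Icc]])
  then obtain B where B: "\<forall>y\<in>F ` {a..c}. norm y \<le> B" unfolding bounded_iff by blast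
  have "\<forall>x\<in>{a..c}. \<bar>F x\<bar> \<le> max B 0" using B by (simp add: le_max_iff_disj)
  then show ?thesis by (intro exI[of _ "max B 0"]) simp
qed

lemma C3_branch_D:
  assumes "C3_branch a c f"
  shows "\<exists>D1 D2 D3 B2 B3. 0 \<le> B2 \<and> 0 \<le> B3 \<and> (\<forall>x\<in>{a<..<c}. (f has_real_derivative D1 x) (at x) \<and>
     (D1 has_real_derivative D2 x) (at x) \<and> (D2 has_real_derivative D3 x) (at x) \<and>
     \<bar>D2 x\<bar> \<le> B2 \<and> \<bar>D3 x\<bar> \<le> B3)"
proof -
  obtain D :: "nat \<Rightarrow> real \<Rightarrow> real" where D: "\<forall>k\<le>3. continuous_on {a..c} (D k)"
     "\<forall>x \<in> {a<..<c}. D 0 x = f x"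
     "\<forall>k<3. \<forall>x \<in> {a<..<c}. (D k has_real_derivative D (Suc k) x) (at x)"
    using assms unfolding C3_branch_def by blast
  have c2: "continuous_on {a..c} (D 2)" and c3: "continuous_on {a..c} (D 3)" using D(1) by simp_all
  obtain B2 where B2: "B2 \<ge> 0" "\<forall>x\<in>{a..c}. \<bar>D 2 x\<bar> \<le> B2" using cont_bound[OF c2] by blast
  obtain B3 where B3: "B3 \<ge> 0" "\<forall>x\<in>{a..c}. \<bar>D 3 x\<bar> \<le> B3" using cont_bound[OF c3] by blast
  have "\<forall>x\<in>{a<..<c}. (f has_real_derivative D 1 x) (at x) \<and>
     (D 1 has_real_derivative D 2 x) (at x) \<and> (D 2 has_real_derivative D 3 x) (at x) \<and>
     \<bar>D 2 x\<bar> \<le> B2 \<and> \<bar>D 3 x\<bar> \<le> B3"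
  proof
    fix x assume x: "x \<in> {a<..<c}"
    have d0: "(D 0 has_real_derivative D 1 x) (at x)" using D(3) x by force
    have "(f has_real_derivative D 1 x) (at x)"
      by (rule has_field_derivative_transform_within_open[OF d0 open_greaterThanLessThan x]) (use D(2) in auto)
    moreover have "(D 1 has_real_derivative D 2 x) (at x)" using D(3)[rule_format, of 1 x] x by (simp add: numeral_2_eq_2)
    moreover have "(D 2 has_real_derivative D 3 x) (at x)" using D(3)[rule_format, of 2 x] x by simp
    ultimately show "(f has_real_derivative D 1 x) (at x) \<and>
     (D 1 has_real_derivative D 2 x) (at x) \<and> (D 2 has_real_derivative D 3 x) (at x) \<and>
     \<bar>D 2 x\<bar> \<le> B2 \<and> \<bar>D 3 x\<bar> \<le> B3" using B2 B3 x by (auto simp: numeral_3_eq_3)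
  qed
  then show ?thesis using B2(1) B3(1) by blast
qed

lemma init_SM:
  assumes dg: "dissipative_gap_map b f" and c3: "C3_gap_map b f"
  shows "\<exists>\<nu> M K. 0 < \<nu> \<and> \<nu> < 1 \<and> 0 \<le> M \<and> 0 \<le> K \<and> SM b f \<nu> M K"
proof -
  have gm: "gap_map b f" using dg unfolding dissipative_gap_map_def by blast
  note gg = gm_basic[OF gm]
  obtain \<nu> where nu: "\<nu> < 1" and dn: "\<forall>x \<in> {b-1..b} - {0}. \<exists>d.
        (f has_real_derivative d) (at x within ({b-1..b} - {0})) \<and> 0 < d \<and> d \<le> \<nu>"
    using dg unfolding dissipative_gap_map_def by blast
  have "b \<in> {b-1..b} - {0}" using gg(2) by auto
  then obtain d0 where "0 < d0" "d0 \<le> \<nu>" using dn by blast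
  then have nu0: "0 < \<nu>" by linarith
  obtain DL1 DL2 DL3 BL2 BL3 where L: "0 \<le> BL2" "0 \<le> BL3" "\<forall>x\<in>{b-1<..<0}. (f has_real_derivative DL1 x) (at x) \<and>
     (DL1 has_real_derivative DL2 x) (at x) \<and> (DL2 has_real_derivative DL3 x) (at x) \<and>
     \<bar>DL2 x\<bar> \<le> BL2 \<and> \<bar>DL3 x\<bar> \<le> BL3"
    using C3_branch_D[of "b-1" 0 f] c3 unfolding C3_gap_map_def by blast
  obtain DR1 DR2 DR3 BR2 BR3 where R: "0 \<le> BR2" "0 \<le> BR3" "\<forall>x\<in>{0<..<b}. (f has_real_derivative DR1 x) (at x) \<and>
     (DR1 has_real_derivative DR2 x) (at x) \<and> (DR2 has_real_derivative DR3 x) (at x) \<and>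
     \<bar>DR2 x\<bar> \<le> BR2 \<and> \<bar>DR3 x\<bar> \<le> BR3"
    using C3_branch_D[of 0 b f] c3 unfolding C3_gap_map_def by blast
  define D1 where "D1 x = (if x < 0 then DL1 x else DR1 x)" for x
  define D2 where "D2 x = (if x < 0 then DL2 x else DR2 x)" for x
  define D3 where "D3 x = (if x < 0 then DL3 x else DR3 x)" for x
  have dbound: "\<And>x d. x \<in> U b \<Longrightarrow> (f has_real_derivative d) (at x) \<Longrightarrow> \<bar>d\<bar> \<le> \<nu>"
  proof -
    fix x d assume x: "x \<in> U b" and fd: "(f has_real_derivative d) (at x)"
    have "x \<in> {b-1..b} - {0}" using x gg(1,2) by (auto simp: U_def)
    then obtain d' where d': "(f has_real_derivative d') (at x within ({b-1..b} - {0}))" "0 < d'" "d' \<le> \<nu>"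
      using dn by blast
    have "at x within ({b-1..b} - {0}) = at x"
      by (rule at_within_open_subset[of _ "U b"]) (use x gg(1,2) in \<open>auto simp: U_def\<close>)
    then have "d' = d" using d'(1) fd DERIV_unique by metis
    then show "\<bar>d\<bar> \<le> \<nu>" using d' by simp
  qed
  have "\<forall>x\<in>U b. (f has_real_derivative D1 x) (at x) \<and>
      (D1 has_real_derivative D2 x) (at x) \<and> (D2 has_real_derivative D3 x) (at x) \<and>
      \<bar>D1 x\<bar> \<le> \<nu> \<and> \<bar>D2 x\<bar> \<le> max BL2 BR2 \<and> \<bar>D3 x\<bar> \<le> max BL3 BR3"
  proof
    fix x assume x: "x \<in> U b"
    show "(f has_real_derivative D1 x) (at x) \<and>
      (D1 has_real_derivative D2 x) (at x) \<and> (D2 has_real_derivative D3 x) (at x) \<and>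
      \<bar>D1 x\<bar> \<le> \<nu> \<and> \<bar>D2 x\<bar> \<le> max BL2 BR2 \<and> \<bar>D3 x\<bar> \<le> max BL3 BR3"
    proof (cases "x < 0")
      case True
      then have xl: "x \<in> {b-1<..<0}" using x by (auto simp: U_def)
      note H = L(3)[rule_format, OF xl]
      have a: "(D1 has_real_derivative D2 x) (at x)"
        using has_field_derivative_transform_within_open[of DL1 "DL2 x" x "{..<0}" D1] H True
        by (auto simp: D1_def D2_def)
      have c: "(D2 has_real_derivative D3 x) (at x)"
        using has_field_derivative_transform_within_open[of DL2 "DL3 x" x "{..<0}" D2] H True
        by (auto simp: D2_def D3_def)
      have e: "D1 x = DL1 x" "D2 x = DL2 x" "D3 x = DL3 x" using True by (simp_all add: D1_def D2_def D3_def)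
      have "\<bar>DL1 x\<bar> \<le> \<nu>" using dbound[OF x] H by blast
      then show ?thesis using a c H unfolding e by (simp add: le_max_iff_disj)
    next
      case False
      then have xr: "x \<in> {0<..<b}" using x by (auto simp: U_def)
      note H = R(3)[rule_format, OF xr]
      have a: "(D1 has_real_derivative D2 x) (at x)"
        using has_field_derivative_transform_within_open[of DR1 "DR2 x" x "{0<..}" D1] H xr
        by (auto simp: D1_def D2_def)
      have c: "(D2 has_real_derivative D3 x) (at x)"
        using has_field_derivative_transform_within_open[of DR2 "DR3 x" x "{0<..}" D2] H xr
        by (auto simp: D2_def D3_def)
      have e: "D1 x = DR1 x" "D2 x = DR2 x" "D3 x = DR3 x" using False by (simp_all add: D1_def D2_def D3_def)
      have "\<bar>DR1 x\<bar> \<le> \<nu>" using dbound[OF x] H by blast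
      then show ?thesis using a c H unfolding e by (simp add: le_max_iff_disj)
    qed
  qed
  then have "SM b f \<nu> (max BL2 BR2) (max BL3 BR3)" unfolding SM_def by blast
  moreover have "0 \<le> max BL2 BR2" "0 \<le> max BL3 BR3" using L(1,2) by (simp_all add: le_max_iff_disj)
  ultimately show ?thesis using nu nu0 by blast
qed


lemma C_exists:
  fixes \<nu> :: real
  assumes "0 < \<nu>" "\<nu> < 1"
  shows "\<exists>C. \<forall>m\<ge>2. real m ^ 2 * \<nu> ^ (m - 1) \<le> C"
proof -
  have "(\<lambda>m. real m * sqrt \<nu> ^ m) \<longlonglongrightarrow> 0"
    by (rule powser_times_n_limit_0) (use assms in simp)
  from tendsto_power[OF this, of 2]
  have "convergent (\<lambda>m. (real m * sqrt \<nu> ^ m) ^ 2)" by (rule convergentI)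
  then obtain B where B: "\<And>m. norm ((real m * sqrt \<nu> ^ m) ^ 2) \<le> B"
  proof -
    from convergent_imp_Bseq[OF \<open>convergent _\<close>] obtain B where "\<forall>m. norm ((real m * sqrt \<nu> ^ m) ^ 2) \<le> B"
      unfolding Bseq_def by blast
    then show ?thesis using that by blast
  qed
  have sq: "\<And>m. (real m * sqrt \<nu> ^ m) ^ 2 = real m ^ 2 * \<nu> ^ m"
  proof -
    fix m
    have "(sqrt \<nu> ^ m) ^ 2 = (sqrt \<nu> ^ 2) ^ m" by (simp add: power_mult[symmetric] mult.commute)
    also have "\<dots> = \<nu> ^ m" using assms by simp
    finally show "(real m * sqrt \<nu> ^ m) ^ 2 = real m ^ 2 * \<nu> ^ m" by (simp add: power_mult_distrib)
  qed
  show ?thesis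
  proof (intro exI allI impI)
    fix m :: nat assume m: "2 \<le> m"
    have "\<nu> ^ m = \<nu> * \<nu> ^ (m - 1)" using m by (cases m) auto
    then have "real m ^ 2 * \<nu> ^ (m - 1) = real m ^ 2 * \<nu> ^ m / \<nu>" using assms by simp
    also have "\<dots> \<le> B / \<nu>" using B[of m] sq[of m] assms by (intro divide_right_mono) auto
    finally show "real m ^ 2 * \<nu> ^ (m - 1) \<le> B / \<nu>" .
  qed
qed

lemma sq_le_pow4: "(j + 2) ^ 2 \<le> 4 * (4::nat) ^ j"
proof (induction j)
  case 0 then show ?case by (simp add: power2_eq_square)
next
  case (Suc j)
  have "(Suc j + 2) ^ 2 \<le> 4 * (j + 2) ^ 2" by (simp add: power2_eq_square)
  also have "\<dots> \<le> 4 * (4 * 4 ^ j)" using Suc by simp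
  finally show ?case by simp
qed

lemma C_small:
  fixes \<nu> :: real
  assumes "0 \<le> \<nu>" "\<nu> \<le> 1/4"
  shows "\<forall>m\<ge>2. real m ^ 2 * \<nu> ^ (m - 1) \<le> 4 * \<nu>"
proof (intro allI impI)
  fix m :: nat assume m: "2 \<le> m"
  define j where "j = m - 2"
  have mj: "m = j + 2" "m - 1 = Suc j" using m by (auto simp: j_def)
  have a: "real ((j + 2) ^ 2) \<le> 4 * 4 ^ j" using sq_le_pow4[of j] by (metis of_nat_le_iff of_nat_mult of_nat_numeral of_nat_power)
  have b: "\<nu> ^ j \<le> (1/4) ^ j" using assms by (intro power_mono) auto
  have "real m ^ 2 * \<nu> ^ j \<le> (4 * 4 ^ j) * (1/4) ^ j"
    using a b assms unfolding mj by (intro mult_mono) auto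
  also have "\<dots> = 4" by (simp add: power_one_over)
  finally have c: "real m ^ 2 * \<nu> ^ j \<le> 4" .
  have "real m ^ 2 * \<nu> ^ (m - 1) = \<nu> * (real m ^ 2 * \<nu> ^ j)" unfolding mj(2) by simp
  also have "\<dots> \<le> \<nu> * 4" using c assms by (intro mult_left_mono) auto
  finally show "real m ^ 2 * \<nu> ^ (m - 1) \<le> 4 * \<nu>" by simp
qed


lemma SM_mono: "SM b h \<nu> M K \<Longrightarrow> M \<le> M' \<Longrightarrow> K \<le> K' \<Longrightarrow> SM b h \<nu> M' K'"
  unfolding SM_def by (meson order_trans)

lemma step':
  fixes x :: "real \<times> (real \<Rightarrow> real)"
  assumes "gap_map (fst x) (snd x)" "SM (fst x) (snd x) \<nu> M K" "0 \<le> \<nu>" "\<nu> \<le> 1"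
    "0 \<le> M" "0 \<le> K" "\<forall>m\<ge>2. real m ^ 2 * \<nu> ^ (m - 1) \<le> Cst" "renormalizable x"
  shows "gap_map (fst (renorm x)) (snd (renorm x)) \<and>
         SM (fst (renorm x)) (snd (renorm x)) (\<nu>^2) (M * Cst) ((K + 3 * M^2) * Cst)"
  using step[of "fst x" "snd x" \<nu> M K Cst] assms by simp

lemma phase2_arith:
  fixes a W q :: real and j :: nat
  assumes "0 \<le> a" "3 * a^2 \<le> W" "0 \<le> q" "4 * q \<le> 1/4"
  shows "a / 4^j * (4 * q) \<le> a / 4^(Suc j)"
    "(W / 2^j + 3 * (a / 4^j)^2) * (4 * q) \<le> W / 2^(Suc j)"
proof -
  show "a / 4^j * (4 * q) \<le> a / 4^(Suc j)"
  proof -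
    have "a / 4^j * (4 * q) \<le> a / 4^j * (1/4)" using assms by (intro mult_left_mono) auto
    then show ?thesis by simp
  qed
  have W0: "0 \<le> W" using assms by (smt (verit) zero_le_power2)
  have p4: "((4::real)^j)^2 = (4^2)^j" by (simp only: power_mult[symmetric] mult.commute)
  have "3 * (a / 4^j)^2 = 3 * a^2 / 16^j" using p4 by (simp add: power_divide)
  also have "\<dots> \<le> W / 16^j" using assms by (intro divide_right_mono) auto
  also have "\<dots> \<le> W / 2^j" using W0 by (intro divide_left_mono) (auto intro: power_mono)
  finally have x: "3 * (a / 4^j)^2 \<le> W / 2^j" .
  have "(W / 2^j + 3 * (a / 4^j)^2) * (4 * q) \<le> (W / 2^j + W / 2^j) * (1/4)"
    using x assms W0 by (intro mult_mono) auto
  also have "\<dots> = W / 2^(Suc j)" by simp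
  finally show "(W / 2^j + 3 * (a / 4^j)^2) * (4 * q) \<le> W / 2^(Suc j)" .
qed

theorem mainTheorem4:
  fixes b :: real and f :: "real \<Rightarrow> real"
  assumes "dissipative_gap_map b f"
    and "C3_gap_map b f"
    and "infinitely_renormalizable b f"
  shows "\<forall>\<epsilon>>0. \<exists>n0::nat. \<forall>n\<ge>n0. \<exists>g.
           affine_gap_map (fst ((renorm ^^ n) (b, f))) g \<and>
           C3_norm (fst ((renorm ^^ n) (b, f)))
             (\<lambda>x. snd ((renorm ^^ n) (b, f)) x - g x) \<le> ereal \<epsilon>"
proof -
  have gm0: "gap_map b f" using assms(1) unfolding dissipative_gap_map_def by blast
  obtain \<nu> M0 K0 where nu: "0 < \<nu>" "\<nu> < 1" and MK0: "0 \<le> M0" "0 \<le> K0" and sm0: "SM b f \<nu> M0 K0"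
    using init_SM[OF assms(1,2)] by blast
  define s where "s n = (renorm ^^ n) (b, f)" for n
  have sS: "s (Suc n) = renorm (s n)" for n by (simp add: s_def)
  have ren: "renormalizable (s n)" for n using assms(3) unfolding infinitely_renormalizable_def s_def by blast
  define v where "v n = \<nu> ^ (2 ^ n)" for n :: nat
  have v_le: "v n \<le> \<nu>" for n unfolding v_def using power_decreasing[of 1 "2^n" \<nu>] nu by simp
  have v_pos: "0 < v n" for n unfolding v_def using nu by simp
  have vS: "v (Suc n) = (v n)^2" for n unfolding v_def by (simp add: power_mult[symmetric] mult.commute)
  have v_mono: "n \<le> n' \<Longrightarrow> v n' \<le> v n" for n n' unfolding v_def
    by (rule power_decreasing) (use nu power_increasing[of n n' "2::nat"] in auto)
  have v_le_pow: "v n \<le> \<nu> ^ n" for n unfolding v_def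
    using nu by (intro power_decreasing) (auto intro: less_imp_le less_exp)
  have P1: "gap_map (fst (s n)) (snd (s n)) \<and> (\<exists>M K. 0 \<le> M \<and> 0 \<le> K \<and> SM (fst (s n)) (snd (s n)) (v n) M K)" for n
  proof (induction n)
    case 0 then show ?case using gm0 sm0 MK0 by (auto simp: s_def v_def)
  next
    case (Suc n)
    then obtain M K where MK: "0 \<le> M" "0 \<le> K" "SM (fst (s n)) (snd (s n)) (v n) M K" and g: "gap_map (fst (s n)) (snd (s n))" by blast
    obtain Cst where C: "\<forall>m\<ge>2. real m ^ 2 * (v n) ^ (m - 1) \<le> Cst"
    proof -
      have "v n < 1" using v_le[of n] nu by linarith
      then show ?thesis using C_exists[of "v n"] v_pos[of n] that by blast
    qed
    have C0: "0 \<le> Cst" using C[rule_format, of 2] v_pos[of n] by simp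
    have "gap_map (fst (renorm (s n))) (snd (renorm (s n))) \<and>
         SM (fst (renorm (s n))) (snd (renorm (s n))) ((v n)^2) (M * Cst) ((K + 3 * M^2) * Cst)"
      by (rule step'[OF g MK(3) _ _ MK(1,2) C ren]) (use v_pos[of n] v_le[of n] nu in \<open>auto intro: less_imp_le\<close>)
    moreover have "0 \<le> M * Cst" "0 \<le> (K + 3 * M^2) * Cst" using MK C0 by simp_all
    ultimately show ?case unfolding sS vS by blast
  qed
  obtain n1 where n1: "\<nu> ^ n1 < 1/16" using real_arch_pow_inv[of "1/16" \<nu>] nu by auto
  define N where "N = n1"
  have vN: "n \<ge> N \<Longrightarrow> v n \<le> 1/16" for n
    using v_mono[of N n] v_le_pow[of N] n1 unfolding N_def by linarith
  obtain MN KN where MKN: "0 \<le> MN" "0 \<le> KN" "SM (fst (s N)) (snd (s N)) (v N) MN KN"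
    using P1[of N] by blast
  define W where "W = KN + 3 * MN^2"
  have W0: "0 \<le> W" "3 * MN^2 \<le> W" using MKN by (auto simp: W_def)
  have P2: "SM (fst (s (N + j))) (snd (s (N + j))) (v (N + j)) (MN / 4^j) (W / 2^j)" for j
  proof (induction j)
    case 0 then show ?case using SM_mono[OF MKN(3)] by (simp add: W_def)
  next
    case (Suc j)
    have vv: "0 \<le> v (N + j)" "v (N + j) \<le> 1/4" using v_pos vN[of "N + j"] by (auto intro: less_imp_le)
    have C: "\<forall>m\<ge>2. real m ^ 2 * (v (N + j)) ^ (m - 1) \<le> 4 * v (N + j)" by (rule C_small[OF vv])
    have "gap_map (fst (renorm (s (N + j)))) (snd (renorm (s (N + j)))) \<and>
         SM (fst (renorm (s (N + j)))) (snd (renorm (s (N + j)))) ((v (N + j))^2) (MN / 4^j * (4 * v (N + j)))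
           ((W / 2^j + 3 * (MN / 4^j)^2) * (4 * v (N + j)))"
      by (rule step'[OF _ Suc.IH _ _ _ _ C ren]) (use P1 vv MKN W0 in auto)
    moreover have "MN / 4^j * (4 * v (N + j)) \<le> MN / 4^(Suc j)"
      "(W / 2^j + 3 * (MN / 4^j)^2) * (4 * v (N + j)) \<le> W / 2^(Suc j)"
      using phase2_arith[OF MKN(1) W0(2) vv(1)] vN[of "N + j"] by auto
    ultimately show ?case unfolding sS[symmetric] vS[symmetric]
      using SM_mono by (simp add: add_Suc_right[symmetric] del: add_Suc_right) blast
  qed
  show ?thesis
  proof (intro allI impI)
    fix \<epsilon> :: real assume e: "0 < \<epsilon>"
    obtain n2 where n2: "\<nu> ^ n2 < \<epsilon> / 2" using real_arch_pow_inv[of "\<epsilon>/2" \<nu>] nu e by auto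
    obtain J where J: "(1/2) ^ J < \<epsilon> / (MN + W + 1)"
      using real_arch_pow_inv[of "\<epsilon> / (MN + W + 1)" "1/2"] e MKN W0 by auto
    show "\<exists>n0. \<forall>n\<ge>n0. \<exists>g. affine_gap_map (fst ((renorm ^^ n) (b, f))) g \<and>
           C3_norm (fst ((renorm ^^ n) (b, f))) (\<lambda>x. snd ((renorm ^^ n) (b, f)) x - g x) \<le> ereal \<epsilon>"
    proof (intro exI[of _ "max n2 (N + J)"] allI impI)
      fix n assume n: "max n2 (N + J) \<le> n"
      define j where "j = n - N"
      have nj: "n = N + j" "J \<le> j" using n by (auto simp: j_def)
      have sm: "SM (fst (s n)) (snd (s n)) (v n) (MN / 4^j) (W / 2^j)" using P2[of j] nj by simp
      have vn: "v n \<le> \<epsilon> / 2" using v_mono[of n2 n] v_le_pow[of n2] n2 n by linarith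
      have hj: "(1/2) ^ j \<le> (1/2::real) ^ J" using nj by (intro power_decreasing) auto
      have pos: "0 < MN + W + 1" using MKN W0 by linarith
      have hj2: "(1/2::real) ^ j * (MN + W + 1) \<le> \<epsilon>"
        using hj J pos by (smt (verit) mult_right_mono pos_less_divide_eq)
      have m1: "MN / 4^j \<le> \<epsilon>"
      proof -
        have "MN / 4^j \<le> MN / 2^j" using MKN by (intro divide_left_mono) (auto intro: power_mono)
        also have "\<dots> = (1/2) ^ j * MN" by (simp add: power_one_over)
        also have "\<dots> \<le> (1/2) ^ j * (MN + W + 1)" using W0 by (intro mult_left_mono) auto
        finally show ?thesis using hj2 by linarith
      qed
      have k1: "W / 2^j \<le> \<epsilon>"
      proof -
        have "W / 2^j = (1/2) ^ j * W" by (simp add: power_one_over)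
        also have "\<dots> \<le> (1/2) ^ j * (MN + W + 1)" using MKN by (intro mult_left_mono) auto
        finally show ?thesis using hj2 by linarith
      qed
      have g: "gap_map (fst (s n)) (snd (s n))" using P1 by blast
      show "\<exists>g. affine_gap_map (fst ((renorm ^^ n) (b, f))) g \<and>
           C3_norm (fst ((renorm ^^ n) (b, f))) (\<lambda>x. snd ((renorm ^^ n) (b, f)) x - g x) \<le> ereal \<epsilon>"
        using approx[OF g sm e vn m1 k1] by (simp add: s_def)
    qed
  qed
qed

end
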